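(* Let $m,n\ge 0$ with $m+n\ge 3$. Then the surjective homomorphism of Leibniz superalgebras $\psi:\mathfrak{stl}(m,n,\mathcal A)\to\mathfrak{sl}(m,n,\mathcal A)$, $\psi(v_{ij}(a))=E_{ij}(a)$, is a central extension; that is, $[t,x]=[x,t]=0$ for all $t\in\operatorname{Ker}\psi$ and all $x\in\mathfrak{stl}(m,n,\mathcal A)$.
   Context: Standing assumptions: $K$ is a field with $\operatorname{char}K\ne 2,3$, and $\mathcal A$ is an associative unital $K$-algebra. A Leibniz superalgebra is a $\mathbb Z_2$-graded $K$-vector space $L=L_0\oplus L_1$ with a bilinear bracket satisfying $[L_\sigma,L_{\sigma'}]\subseteq L_{\sigma+\sigma'}$ and $[[a,b],c]=[a,[b,c]]-(-1)^{|a||b|}[b,[a,c]]$ for homogeneous $a,b,c$. Every Lie superalgebra is a Leibniz superalgebra. For $1\le i,j\le m+n$ put $\tau_{ij}=0$ if $i,j\le m$ or $i,j\ge m+1$, and $\tau_{ij}=1$ otherwise. $\mathfrak{gl}(m,n,\mathcal A)$ is the Lie superalgebra of $(m+n)\times(m+n)$ matrices over $\mathcal A$, where the matrix unit $E_{ij}(a)$ (entry $a$ in position $(i,j)$, zeros elsewhere) has degree $\tau_{ij}$, with bracket $[X,Y]=XY-(-1)^{\alpha\beta}YX$ for $X$ of degree $\alpha$, $Y$ of degree $\beta$. $\mathfrak{sl}(m,n,\mathcal A)$ is the subsuperalgebra generated by all $E_{ij}(a)$ with $i\ne j$, $a\in\mathcal A$ (the derived algebra of $\mathfrak{gl}(m,n,\mathcal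 A)$). The Steinberg Leibniz superalgebra $\mathfrak{stl}(m,n,\mathcal A)$ is the Leibniz superalgebra generated by symbols $v_{ij}(a)$, $1\le i\ne j\le m+n$, $a\in\mathcal A$, with $v_{ij}(a)$ of degree $\tau_{ij}$, subject to: (1) $v_{ij}$ is $K$-linear in $a$; (2) $[v_{ij}(a),v_{kl}(b)]=0$ if $i\ne l$ and $j\ne k$; (3) $[v_{ij}(a),v_{kl}(b)]=v_{il}(ab)$ if $i\ne l$, $j=k$; (4) $[v_{ij}(a),v_{kl}(b)]=-(-1)^{\tau_{ij}\tau_{kl}}v_{kj}(ba)$ if $i=l$, $j\ne k$. *)

theory Defs
  imports Main
begin

text \<open>Indices are 0-based: 0 .. m+n-1; index i is "even" iff i < m.
  Degrees in Z_2 are represented by bool (True = odd).\<close>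

definition tau :: "nat \<Rightarrow> nat \<Rightarrow> nat \<Rightarrow> bool" where
  "tau m i j = ((i < m) \<noteq> (j < m))"

definition kalg :: "('k::field \<Rightarrow> 'a::ring_1 \<Rightarrow> 'a) \<Rightarrow> bool" where
  "kalg smul \<longleftrightarrow>
     (\<forall>k a b. smul k (a + b) = smul k a + smul k b) \<and>
     (\<forall>k l a. smul (k + l) a = smul k a + smul l a) \<and>
     (\<forall>k l a. smul (k * l) a = smul k (smul l a)) \<and>
     (\<forall>a. smul 1 a = a) \<and>
     (\<forall>k a b. smul k (a * b) = smul k a * b) \<and>
     (\<forall>k a b. smul k (a * b) = a * smul k b)"

text \<open>Formal expressions in the generators v_ij(a): elements of the free
  K-vector space with a free bilinear bracket.\<close>

datatype ('k, 'a) tm =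
    Gen nat nat 'a
  | Zr
  | Ad "('k, 'a) tm" "('k, 'a) tm"
  | Sm 'k "('k, 'a) tm"
  | Br "('k, 'a) tm" "('k, 'a) tm"

fun wf_tm :: "nat \<Rightarrow> nat \<Rightarrow> ('k, 'a) tm \<Rightarrow> bool" where
  "wf_tm m n (Gen i j a) = (i < m + n \<and> j < m + n \<and> i \<noteq> j)"
| "wf_tm m n Zr = True"
| "wf_tm m n (Ad s t) = (wf_tm m n s \<and> wf_tm m n t)"
| "wf_tm m n (Sm k t) = wf_tm m n t"
| "wf_tm m n (Br s t) = (wf_tm m n s \<and> wf_tm m n t)"

inductive hdeg :: "nat \<Rightarrow> ('k, 'a) tm \<Rightarrow> bool \<Rightarrow> bool" for m where
  "hdeg m (Gen i j a) (tau m i j)"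
| "hdeg m Zr d"
| "hdeg m s d \<Longrightarrow> hdeg m t d \<Longrightarrow> hdeg m (Ad s t) d"
| "hdeg m t d \<Longrightarrow> hdeg m (Sm k t) d"
| "hdeg m s d1 \<Longrightarrow> hdeg m t d2 \<Longrightarrow> hdeg m (Br s t) (d1 \<noteq> d2)"

definition sgn :: "bool \<Rightarrow> 'k::field" where
  "sgn b = (if b then -1 else 1)"

text \<open>The congruence defining the Steinberg Leibniz superalgebra stl(m,n,A):
  stl(m,n,A) is the set of well-formed expressions modulo stl_eq.\<close>

inductive stl_eq :: "nat \<Rightarrow> nat \<Rightarrow> ('k::field \<Rightarrow> 'a::ring_1 \<Rightarrow> 'a)
    \<Rightarrow> ('k, 'a) tm \<Rightarrow> ('k, 'a) tm \<Rightarrow> bool" for m n smul where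
  refl: "stl_eq m n smul x x"
| sym: "stl_eq m n smul x y \<Longrightarrow> stl_eq m n smul y x"
| trans: "stl_eq m n smul x y \<Longrightarrow> stl_eq m n smul y z \<Longrightarrow> stl_eq m n smul x z"
| cong_Ad: "stl_eq m n smul x x' \<Longrightarrow> stl_eq m n smul y y' \<Longrightarrow> stl_eq m n smul (Ad x y) (Ad x' y')"
| cong_Sm: "stl_eq m n smul x x' \<Longrightarrow> stl_eq m n smul (Sm k x) (Sm k x')"
| cong_Br: "stl_eq m n smul x x' \<Longrightarrow> stl_eq m n smul y y' \<Longrightarrow> stl_eq m n smul (Br x y) (Br x' y')"
| add_assoc: "stl_eq m n smul (Ad (Ad x y) z) (Ad x (Ad y z))"
| add_comm: "stl_eq m n smul (Ad x y) (Ad y x)"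
| add_zero: "stl_eq m n smul (Ad x Zr) x"
| add_neg: "stl_eq m n smul (Ad x (Sm (-1) x)) Zr"
| sm_add: "stl_eq m n smul (Sm k (Ad x y)) (Ad (Sm k x) (Sm k y))"
| add_sm: "stl_eq m n smul (Sm (k + l) x) (Ad (Sm k x) (Sm l x))"
| sm_mult: "stl_eq m n smul (Sm (k * l) x) (Sm k (Sm l x))"
| sm_one: "stl_eq m n smul (Sm 1 x) x"
| br_add_left: "stl_eq m n smul (Br (Ad x y) z) (Ad (Br x z) (Br y z))"
| br_add_right: "stl_eq m n smul (Br x (Ad y z)) (Ad (Br x y) (Br x z))"
| br_sm_left: "stl_eq m n smul (Br (Sm k x) y) (Sm k (Br x y))"
| br_sm_right: "stl_eq m n smul (Br x (Sm k y)) (Sm k (Br x y))"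
| leibniz: "hdeg m a da \<Longrightarrow> hdeg m b db \<Longrightarrow> hdeg m c dc \<Longrightarrow>
     stl_eq m n smul (Br (Br a b) c)
       (Ad (Br a (Br b c)) (Sm (- sgn (da \<and> db)) (Br b (Br a c))))"
| rel1_add: "i < m + n \<Longrightarrow> j < m + n \<Longrightarrow> i \<noteq> j \<Longrightarrow>
     stl_eq m n smul (Gen i j (a + b)) (Ad (Gen i j a) (Gen i j b))"
| rel1_sm: "i < m + n \<Longrightarrow> j < m + n \<Longrightarrow> i \<noteq> j \<Longrightarrow>
     stl_eq m n smul (Gen i j (smul k a)) (Sm k (Gen i j a))"
| rel2: "i < m + n \<Longrightarrow> j < m + n \<Longrightarrow> k < m + n \<Longrightarrow> l < m + n \<Longrightarrow> i \<noteq> j \<Longrightarrow> k \<noteq> l \<Longrightarrow>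
     i \<noteq> l \<Longrightarrow> j \<noteq> k \<Longrightarrow> stl_eq m n smul (Br (Gen i j a) (Gen k l b)) Zr"
| rel3: "i < m + n \<Longrightarrow> j < m + n \<Longrightarrow> l < m + n \<Longrightarrow> i \<noteq> j \<Longrightarrow> j \<noteq> l \<Longrightarrow>
     i \<noteq> l \<Longrightarrow> stl_eq m n smul (Br (Gen i j a) (Gen j l b)) (Gen i l (a * b))"
| rel4: "i < m + n \<Longrightarrow> j < m + n \<Longrightarrow> k < m + n \<Longrightarrow> i \<noteq> j \<Longrightarrow> k \<noteq> i \<Longrightarrow>
     j \<noteq> k \<Longrightarrow> stl_eq m n smul (Br (Gen i j a) (Gen k i b))
        (Sm (- sgn (tau m i j \<and> tau m k i)) (Gen k j (b * a)))"

text \<open>Matrices in gl(m,n,A): functions nat => nat => 'a, only entries with indices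
  < m+n matter (all others are 0 for the matrices arising here).\<close>

type_synonym 'a mat = "nat \<Rightarrow> nat \<Rightarrow> 'a"

definition E :: "nat \<Rightarrow> nat \<Rightarrow> 'a::ring_1 \<Rightarrow> 'a mat" where
  "E i j a = (\<lambda>r s. if r = i \<and> s = j then a else 0)"

definition mmul :: "nat \<Rightarrow> 'a::ring_1 mat \<Rightarrow> 'a mat \<Rightarrow> 'a mat" where
  "mmul N X Y = (\<lambda>r s. \<Sum>t<N. X r t * Y t s)"

definition mpart :: "nat \<Rightarrow> bool \<Rightarrow> 'a::ring_1 mat \<Rightarrow> 'a mat" where
  "mpart m d X = (\<lambda>r s. if tau m r s = d then X r s else 0)"

text \<open>Super bracket of gl(m,n,A), extended bilinearly to non-homogeneous matrices:
  [X,Y] = XY - sum_{a,b} (-1)^(ab) Y_b X_a.\<close>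

definition sbr :: "nat \<Rightarrow> nat \<Rightarrow> 'a::ring_1 mat \<Rightarrow> 'a mat \<Rightarrow> 'a mat" where
  "sbr m n X Y = (let N = m + n; X0 = mpart m False X; X1 = mpart m True X;
       Y0 = mpart m False Y; Y1 = mpart m True Y
     in (\<lambda>r s. mmul N X Y r s - (mmul N Y0 X0 r s + mmul N Y1 X0 r s
              + mmul N Y0 X1 r s - mmul N Y1 X1 r s)))"

fun psi :: "nat \<Rightarrow> nat \<Rightarrow> ('k \<Rightarrow> 'a::ring_1 \<Rightarrow> 'a) \<Rightarrow> ('k, 'a) tm \<Rightarrow> 'a mat" where
  "psi m n smul (Gen i j a) = E i j a"
| "psi m n smul Zr = (\<lambda>r s. 0)"
| "psi m n smul (Ad x y) = (\<lambda>r s. psi m n smul x r s + psi m n smul y r s)"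
| "psi m n smul (Sm k x) = (\<lambda>r s. smul k (psi m n smul x r s))"
| "psi m n smul (Br x y) = sbr m n (psi m n smul x) (psi m n smul y)"

end

theory Submission
  imports Defs "HOL-Library.Function_Algebras"
begin

lemma fun2_eq: "(\<And>r s. F r s = G r s) \<Longrightarrow> F = G" by (simp add: fun_eq_iff)

lemma tau_sym: "tau m j i = tau m i j" by (auto simp: tau_def)
lemma tau_trans: "tau m r s = (tau m r t \<noteq> tau m t s)" by (auto simp: tau_def)

lemma mmul_assoc: "mmul N (mmul N X Y) Z = mmul N X (mmul N Y Z)"
proof (rule fun2_eq)
  fix r s
  have "mmul N (mmul N X Y) Z r s = (\<Sum>t<N. \<Sum>u<N. X r u * Y u t * Z t s)"
    by (simp add: mmul_def sum_distrib_right)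
  also have "\<dots> = (\<Sum>u<N. \<Sum>t<N. X r u * Y u t * Z t s)" by (rule sum.swap)
  also have "\<dots> = mmul N X (mmul N Y Z) r s" by (simp add: mmul_def sum_distrib_left mult.assoc)
  finally show "mmul N (mmul N X Y) Z r s = mmul N X (mmul N Y Z) r s" .
qed

lemma mmul_add_l: "mmul N (X + Y) Z = mmul N X Z + mmul N Y Z"
  unfolding mmul_def by (rule fun2_eq) (simp add: distrib_right sum.distrib)
lemma mmul_add_r: "mmul N Z (X + Y) = mmul N Z X + mmul N Z Y"
  unfolding mmul_def by (rule fun2_eq) (simp add: distrib_left sum.distrib)
lemma mmul_minus_l: "mmul N (- X) Z = - mmul N X Z"
  unfolding mmul_def by (rule fun2_eq) (simp add: sum_negf)
lemma mmul_minus_r: "mmul N Z (- X) = - mmul N Z X"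
  unfolding mmul_def by (rule fun2_eq) (simp add: sum_negf)
lemma mmul_diff_l: "mmul N (X - Y) Z = mmul N X Z - mmul N Y Z"
  unfolding mmul_def by (rule fun2_eq) (simp add: left_diff_distrib sum_subtractf)
lemma mmul_diff_r: "mmul N Z (X - Y) = mmul N Z X - mmul N Z Y"
  unfolding mmul_def by (rule fun2_eq) (simp add: right_diff_distrib sum_subtractf)
lemma mmul_zero_l: "mmul N 0 Z = 0"
  unfolding mmul_def by (rule fun2_eq) simp
lemma mmul_zero_r: "mmul N Z 0 = 0"
  unfolding mmul_def by (rule fun2_eq) simp

lemmas mmul_lin = mmul_add_l mmul_add_r mmul_minus_l mmul_minus_r mmul_diff_l mmul_diff_r
  mmul_zero_l mmul_zero_r

lemma mpart_add: "mpart m d (X + Y) = mpart m d X + mpart m d Y"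
  unfolding mpart_def by (rule fun2_eq) simp
lemma mpart_minus: "mpart m d (- X) = - mpart m d X"
  unfolding mpart_def by (rule fun2_eq) simp
lemma mpart_diff: "mpart m d (X - Y) = mpart m d X - mpart m d Y"
  unfolding mpart_def by (rule fun2_eq) simp
lemma mpart_zero: "mpart m d 0 = 0"
  unfolding mpart_def by (rule fun2_eq) simp

lemma mpart_other: assumes "mpart m d X = X" shows "mpart m (\<not> d) X = 0"
proof (rule fun2_eq)
  fix r s
  have "mpart m d X r s = X r s" using assms by simp
  thus "mpart m (\<not> d) X r s = 0 r s" by (auto simp: mpart_def split: if_splits)
qed

lemma sbr_hom:
  assumes "mpart m dx X = X" "mpart m dy Y = Y"
  shows "sbr m n X Y = mmul (m+n) X Y - (if dx \<and> dy then - mmul (m+n) Y X else mmul (m+n) Y X)"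
proof -
  have ox: "mpart m (\<not> dx) X = 0" and oy: "mpart m (\<not> dy) Y = 0" using mpart_other[OF assms(1)] mpart_other[OF assms(2)] by -
  have e: "sbr m n X Y = mmul (m+n) X Y - (mmul (m+n) (mpart m False Y) (mpart m False X)
     + mmul (m+n) (mpart m True Y) (mpart m False X) + mmul (m+n) (mpart m False Y) (mpart m True X)
     - mmul (m+n) (mpart m True Y) (mpart m True X))"
    by (simp add: sbr_def Let_def fun_eq_iff)
  have xT: "mpart m True X = (if dx then X else 0)" and xF: "mpart m False X = (if dx then 0 else X)"
    using assms(1) ox by (cases dx, simp_all)+
  have yT: "mpart m True Y = (if dy then Y else 0)" and yF: "mpart m False Y = (if dy then 0 else Y)"
    using assms(2) oy by (cases dy, simp_all)+
  show ?thesis unfolding e xT xF yT yF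
    by (cases dx; cases dy) (simp_all add: mmul_zero_l mmul_zero_r)
qed



lemma sbr_expand: "sbr m n X Y = mmul (m+n) X Y - (mmul (m+n) (mpart m False Y) (mpart m False X)
     + mmul (m+n) (mpart m True Y) (mpart m False X) + mmul (m+n) (mpart m False Y) (mpart m True X)
     - mmul (m+n) (mpart m True Y) (mpart m True X))"
  by (simp add: sbr_def Let_def fun_eq_iff)

lemma sbr_add_l: "sbr m n (X + Y) Z = sbr m n X Z + sbr m n Y Z"
  unfolding sbr_expand by (simp add: mpart_add mmul_lin algebra_simps)
lemma sbr_add_r: "sbr m n Z (X + Y) = sbr m n Z X + sbr m n Z Y"
  unfolding sbr_expand by (simp add: mpart_add mmul_lin algebra_simps)

lemma mpart_E: "mpart m d (E i j a) = (if tau m i j = d then E i j a else 0)"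
  by (rule fun2_eq) (auto simp: mpart_def E_def)

lemma mmul_E: "mmul N (E i j a) (E k l b) = (if j = k \<and> j < N then E i l (a*b) else 0)"
proof (rule fun2_eq)
  fix r s
  have eq: "E i j a r t * E k l b t s = (if t = j then (if r = i \<and> j = k \<and> s = l then a * b else 0) else 0)" for t
    by (auto simp: E_def)
  have "mmul N (E i j a) (E k l b) r s = (\<Sum>t<N. if t = j then (if r = i \<and> j = k \<and> s = l then a * b else 0) else 0)"
    by (simp only: mmul_def eq)
  also have "\<dots> = (if j < N then (if r = i \<and> j = k \<and> s = l then a * b else 0) else 0)"
    by (simp add: sum.delta')
  also have "\<dots> = (if j = k \<and> j < N then E i l (a*b) else 0) r s" by (auto simp: E_def)
  finally show "mmul N (E i j a) (E k l b) r s = (if j = k \<and> j < N then E i l (a*b) else 0) r s" .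
qed

lemma mmul_hom:
  assumes "mpart m dx X = X" "mpart m dy Y = Y"
  shows "mpart m (dx \<noteq> dy) (mmul N X Y) = mmul N X Y"
proof (rule fun2_eq)
  fix r s
  have hx: "X r t = (if tau m r t = dx then X r t else 0)" for t
    using fun_cong[OF fun_cong[OF assms(1)], of r t] by (simp add: mpart_def)
  have hy: "Y t s = (if tau m t s = dy then Y t s else 0)" for t
    using fun_cong[OF fun_cong[OF assms(2)], of t s] by (simp add: mpart_def)
  show "mpart m (dx \<noteq> dy) (mmul N X Y) r s = mmul N X Y r s"
  proof (cases "tau m r s = (dx \<noteq> dy)")
    case True thus ?thesis by (simp add: mpart_def)
  next
    case False
    have "X r t * Y t s = 0" for t
    proof (cases "tau m r t = dx \<and> tau m t s = dy")
      case True thus ?thesis using False tau_trans[of m r s t] by auto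
    next
      case False thus ?thesis using hx[of t] hy[of t] by (metis mult_zero_left mult_zero_right)
    qed
    hence "mmul N X Y r s = 0" by (simp add: mmul_def)
    thus ?thesis using False by (simp add: mpart_def)
  qed
qed

lemma sbr_homog:
  assumes "mpart m dx X = X" "mpart m dy Y = Y"
  shows "mpart m (dx \<noteq> dy) (sbr m n X Y) = sbr m n X Y"
proof -
  have 1: "mpart m (dx \<noteq> dy) (mmul (m+n) X Y) = mmul (m+n) X Y" by (rule mmul_hom[OF assms])
  have 2: "mpart m (dx \<noteq> dy) (mmul (m+n) Y X) = mmul (m+n) Y X"
  proof -
    have "(dy \<noteq> dx) = (dx \<noteq> dy)" by auto
    thus ?thesis using mmul_hom[OF assms(2) assms(1), of "m+n"] by simp
  qed
  have 3: "mpart m (dx \<noteq> dy) (if dx \<and> dy then - mmul (m+n) Y X else mmul (m+n) Y X)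
      = (if dx \<and> dy then - mmul (m+n) Y X else mmul (m+n) Y X)"
    by (simp only: if_distrib[of "mpart m (dx \<noteq> dy)"] mpart_minus 2)
  show ?thesis unfolding sbr_hom[OF assms] by (simp only: mpart_diff 1 3)
qed

lemma sbr_leibniz:
  assumes a: "mpart m da A = A" and b: "mpart m db B = B" and c: "mpart m dc C = C"
  shows "sbr m n (sbr m n A B) C = sbr m n A (sbr m n B C)
     + (if da \<and> db then sbr m n B (sbr m n A C) else - sbr m n B (sbr m n A C))"
proof -
  note ab = sbr_homog[OF a b, of n] and bc = sbr_homog[OF b c, of n] and ac = sbr_homog[OF a c, of n]
  note e1 = sbr_hom[OF ab c] and e2 = sbr_hom[OF a bc] and e3 = sbr_hom[OF b ac]
  note f = sbr_hom[OF a b] sbr_hom[OF b c] sbr_hom[OF a c]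
  show ?thesis unfolding e1 e2 e3 unfolding f
    by (cases da; cases db; cases dc) (simp_all add: mmul_lin mmul_assoc algebra_simps)
qed


lemma sgn_sq: "sgn b * sgn b = (1::'k::field)" by (simp add: sgn_def)

locale kal =
  fixes smul :: "'k::field \<Rightarrow> 'a::ring_1 \<Rightarrow> 'a"
  assumes kalg: "kalg smul"
begin

lemma sm_add: "smul k (a + b) = smul k a + smul k b" using kalg unfolding kalg_def by blast
lemma sm_addk: "smul (k + l) a = smul k a + smul l a" using kalg unfolding kalg_def by blast
lemma sm_mult: "smul (k * l) a = smul k (smul l a)" using kalg unfolding kalg_def by blast
lemma sm_one: "smul 1 a = a" using kalg unfolding kalg_def by blast
lemma sm_mult_l: "smul k (a * b) = smul k a * b" using kalg unfolding kalg_def by blast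
lemma sm_mult_r: "smul k (a * b) = a * smul k b" using kalg unfolding kalg_def by blast

lemma sm_zero_r: "smul k 0 = 0"
proof -
  have "smul k 0 = smul k 0 + smul k 0" using sm_add[of k 0 0] by simp
  thus ?thesis by simp
qed
lemma sm_zero_l: "smul 0 a = 0"
proof -
  have "smul 0 a = smul 0 a + smul 0 a" using sm_addk[of 0 0 a] by simp
  thus ?thesis by simp
qed
lemma sm_neg: "smul k (- a) = - smul k a"
proof -
  have "smul k a + smul k (- a) = 0" using sm_add[of k a "- a"] by (simp add: sm_zero_r)
  from minus_unique[OF this] show ?thesis by (rule HOL.sym)
qed
lemma sm_minus_one: "smul (-1) a = - a"
proof -
  have "smul 1 a + smul (-1) a = smul (1 + -1) a" by (rule sm_addk[symmetric])
  also have "\<dots> = 0" by (simp add: sm_zero_l)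
  finally have "a + smul (-1) a = 0" by (simp only: sm_one)
  from minus_unique[OF this] show ?thesis by (rule HOL.sym)
qed
lemma sm_diff: "smul k (a - b) = smul k a - smul k b"
  by (simp only: diff_conv_add_uminus sm_add sm_neg)
lemma sm_sum: "smul k (sum f A) = (\<Sum>x\<in>A. smul k (f x))"
  by (induct A rule: infinite_finite_induct) (simp_all add: sm_add sm_zero_r)
lemma sm_sgn: "smul (sgn b) a = (if b then - a else a)"
proof (cases b)
  case True
  have "smul (sgn b) a = smul (-1) a" using True by (simp add: sgn_def)
  thus ?thesis using True by (simp only: sm_minus_one if_True)
next
  case False
  have "smul (sgn b) a = smul 1 a" using False by (simp add: sgn_def)
  thus ?thesis using False by (simp only: sm_one if_False)
qed
lemma sm_msgn: "smul (- sgn b) a = (if b then a else - a)"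
proof (cases b)
  case True
  have "smul (- sgn b) a = smul 1 a" using True by (simp add: sgn_def)
  thus ?thesis using True by (simp only: sm_one if_True)
next
  case False
  have "smul (- sgn b) a = smul (-1) a" using False by (simp add: sgn_def)
  thus ?thesis using False by (simp only: sm_minus_one if_False)
qed

definition msm :: "'k \<Rightarrow> 'a mat \<Rightarrow> 'a mat" where
  "msm k X = (\<lambda>r s. smul k (X r s))"

lemma msm_add: "msm k (X + Y) = msm k X + msm k Y"
  by (rule fun2_eq) (simp add: msm_def sm_add)
lemma msm_minus: "msm k (- X) = - msm k X"
  by (rule fun2_eq) (simp add: msm_def sm_neg)
lemma msm_diff: "msm k (X - Y) = msm k X - msm k Y"
  by (rule fun2_eq) (simp add: msm_def sm_diff)
lemma msm_addk: "msm (k + l) X = msm k X + msm l X"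
  by (rule fun2_eq) (simp add: msm_def sm_addk)
lemma msm_mult: "msm (k * l) X = msm k (msm l X)"
  by (rule fun2_eq) (simp add: msm_def sm_mult)
lemma msm_one: "msm 1 X = X"
  by (rule fun2_eq) (simp add: msm_def sm_one)
lemma msm_minus_one: "msm (-1) X = - X"
  by (rule fun2_eq) (simp add: msm_def sm_minus_one)
lemma msm_msgn: "msm (- sgn b) X = (if b then X else - X)"
  by (rule fun2_eq) (simp add: msm_def sm_msgn)
lemma mpart_msm: "mpart m d (msm k X) = msm k (mpart m d X)"
  by (rule fun2_eq) (simp add: msm_def mpart_def sm_zero_r)
lemma mmul_msm_l: "mmul N (msm k X) Y = msm k (mmul N X Y)"
  by (rule fun2_eq) (simp add: msm_def mmul_def sm_sum sm_mult_l)
lemma mmul_msm_r: "mmul N X (msm k Y) = msm k (mmul N X Y)"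
  by (rule fun2_eq) (simp add: msm_def mmul_def sm_sum sm_mult_r)
lemma sbr_msm_l: "sbr m n (msm k X) Y = msm k (sbr m n X Y)"
  unfolding sbr_expand by (simp add: mpart_msm mmul_msm_l mmul_msm_r msm_add msm_diff)
lemma sbr_msm_r: "sbr m n X (msm k Y) = msm k (sbr m n X Y)"
  unfolding sbr_expand by (simp add: mpart_msm mmul_msm_l mmul_msm_r msm_add msm_diff)

lemma psi_Ad: "psi m n smul (Ad x y) = psi m n smul x + psi m n smul y"
  by (rule fun2_eq) simp
lemma psi_Sm: "psi m n smul (Sm k x) = msm k (psi m n smul x)"
  by (simp add: msm_def)
lemma psi_Zr: "psi m n smul Zr = 0"
  by (rule fun2_eq) simp

lemma psi_hdeg: "hdeg m x d \<Longrightarrow> mpart m d (psi m n smul x) = psi m n smul x"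
proof (induction x d rule: hdeg.induct)
  case (1 i j a) thus ?case by (simp add: mpart_E)
next
  case (2 d) thus ?case by (simp only: psi_Zr mpart_zero)
next
  case (3 s d t) thus ?case by (simp only: psi_Ad mpart_add)
next
  case (4 t d k) thus ?case by (simp only: psi_Sm mpart_msm)
next
  case (5 s d1 t d2) thus ?case by (simp only: psi.simps sbr_homog)
qed

lemma E_add: "E i j (a + b) = E i j a + E i j b"
  by (rule fun2_eq) (simp add: E_def)
lemma E_sm: "E i j (smul k a) = msm k (E i j a)"
  by (rule fun2_eq) (simp add: E_def msm_def sm_zero_r)

lemma sbr_E:
  "sbr m n (E i j a) (E k l b) = (if j = k \<and> j < m + n then E i l (a*b) else 0)
     - (if tau m i j \<and> tau m k l then - (if l = i \<and> l < m + n then E k j (b*a) else 0)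
        else (if l = i \<and> l < m + n then E k j (b*a) else 0))"
proof -
  have h1: "mpart m (tau m i j) (E i j a) = E i j a" and h2: "mpart m (tau m k l) (E k l b) = E k l b"
    by (simp_all add: mpart_E)
  show ?thesis by (simp only: sbr_hom[OF h1 h2] mmul_E)
qed

lemma psi_sound: "stl_eq m n smul x y \<Longrightarrow> psi m n smul x = psi m n smul y"
proof (induction rule: stl_eq.induct)
  case (add_assoc x y z) thus ?case by (simp only: psi_Ad add.assoc)
next
  case (add_comm x y) thus ?case by (simp only: psi_Ad add.commute)
next
  case (add_zero x) thus ?case by (simp only: psi_Ad psi_Zr add_0_right)
next
  case (add_neg x) thus ?case by (simp only: psi_Ad psi_Zr psi_Sm msm_minus_one right_minus)
next
  case (sm_add k x y) thus ?case by (simp only: psi_Ad psi_Sm msm_add)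
next
  case (add_sm k l x) thus ?case by (simp only: psi_Ad psi_Sm msm_addk)
next
  case (sm_mult k l x) thus ?case by (simp only: psi_Sm msm_mult)
next
  case (sm_one x) thus ?case by (simp only: psi_Sm msm_one)
next
  case (br_add_left x y z) thus ?case by (simp only: psi_Ad psi.simps(5) sbr_add_l)
next
  case (br_add_right x y z) thus ?case by (simp only: psi_Ad psi.simps(5) sbr_add_r)
next
  case (br_sm_left k x y) thus ?case by (simp only: psi_Sm psi.simps(5) sbr_msm_l)
next
  case (br_sm_right x k y) thus ?case by (simp only: psi_Sm psi.simps(5) sbr_msm_r)
next
  case (leibniz a da b db c dc)
  note h = psi_hdeg[OF leibniz(1), of n] psi_hdeg[OF leibniz(2), of n] psi_hdeg[OF leibniz(3), of n]
  show ?case by (simp only: psi_Ad psi_Sm psi.simps(5) msm_msgn sbr_leibniz[OF h])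
next
  case (rel1_add i j a b) thus ?case by (simp only: psi_Ad psi.simps(1) E_add)
next
  case (rel1_sm i j k a) thus ?case by (simp only: psi_Sm psi.simps(1) E_sm)
next
  case (rel2 i j k l a b) thus ?case by (simp add: sbr_E)
next
  case (rel3 i j l a b) thus ?case by (simp add: sbr_E)
next
  case (rel4 i j k a b) thus ?case by (simp add: sbr_E psi_Sm msm_msgn fun_Compl_def del: psi.simps(4))
qed simp_all

end


locale stl = kal smul for smul :: "'k::field \<Rightarrow> 'a::ring_1 \<Rightarrow> 'a" +
  fixes m n :: nat
begin

abbreviation eqv (infix "\<approx>" 50) where "x \<approx> y \<equiv> stl_eq m n smul x y"
abbreviation ps where "ps x \<equiv> psi m n smul x"
abbreviation NN where "NN \<equiv> m + n"

lemma eq_refl: "x \<approx> x" by (rule stl_eq.refl)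
lemma eq_sym: "x \<approx> y \<Longrightarrow> y \<approx> x" by (rule stl_eq.sym)
lemma eq_trans[trans]: "x \<approx> y \<Longrightarrow> y \<approx> z \<Longrightarrow> x \<approx> z" by (rule stl_eq.trans)
lemma ad_cong: "x \<approx> x' \<Longrightarrow> y \<approx> y' \<Longrightarrow> Ad x y \<approx> Ad x' y'" by (rule stl_eq.cong_Ad)
lemma sm_cong: "x \<approx> x' \<Longrightarrow> Sm k x \<approx> Sm k x'" by (rule stl_eq.cong_Sm)
lemma br_cong: "x \<approx> x' \<Longrightarrow> y \<approx> y' \<Longrightarrow> Br x y \<approx> Br x' y'" by (rule stl_eq.cong_Br)

lemma sm0: "Sm 0 x \<approx> Zr"
proof -
  have "Sm 0 x = Sm (1 + -1) x" by simp
  also have "\<dots> \<approx> Ad (Sm 1 x) (Sm (-1) x)" by (rule stl_eq.add_sm)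
  also have "\<dots> \<approx> Ad x (Sm (-1) x)" by (intro ad_cong stl_eq.sm_one eq_refl)
  also have "\<dots> \<approx> Zr" by (rule stl_eq.add_neg)
  finally show ?thesis .
qed

lemma smZr: "Sm k Zr \<approx> Zr"
proof -
  have "Sm k Zr \<approx> Sm k (Sm 0 Zr)" by (intro sm_cong eq_sym[OF sm0])
  also have "\<dots> \<approx> Sm (k * 0) Zr" by (rule eq_sym[OF stl_eq.sm_mult])
  also have "\<dots> = Sm 0 Zr" by simp
  also have "\<dots> \<approx> Zr" by (rule sm0)
  finally show ?thesis .
qed

lemma brZl: "Br Zr y \<approx> Zr"
proof -
  have "Br Zr y \<approx> Br (Sm 0 Zr) y" by (intro br_cong eq_sym[OF sm0] eq_refl)
  also have "\<dots> \<approx> Sm 0 (Br Zr y)" by (rule stl_eq.br_sm_left)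
  also have "\<dots> \<approx> Zr" by (rule sm0)
  finally show ?thesis .
qed

lemma brZr: "Br x Zr \<approx> Zr"
proof -
  have "Br x Zr \<approx> Br x (Sm 0 Zr)" by (intro br_cong eq_sym[OF sm0] eq_refl)
  also have "\<dots> \<approx> Sm 0 (Br x Zr)" by (rule stl_eq.br_sm_right)
  also have "\<dots> \<approx> Zr" by (rule sm0)
  finally show ?thesis .
qed

lemma addZl: "Ad Zr x \<approx> x"
  using stl_eq.add_comm stl_eq.add_zero eq_trans by blast

lemma swap4: "Ad (Ad a b) (Ad c d) \<approx> Ad (Ad a c) (Ad b d)"
proof -
  have "Ad (Ad a b) (Ad c d) \<approx> Ad a (Ad b (Ad c d))" by (rule stl_eq.add_assoc)
  also have "\<dots> \<approx> Ad a (Ad (Ad b c) d)" by (intro ad_cong eq_refl eq_sym[OF stl_eq.add_assoc])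
  also have "\<dots> \<approx> Ad a (Ad (Ad c b) d)" by (intro ad_cong eq_refl stl_eq.add_comm)
  also have "\<dots> \<approx> Ad a (Ad c (Ad b d))" by (intro ad_cong eq_refl stl_eq.add_assoc)
  also have "\<dots> \<approx> Ad (Ad a c) (Ad b d)" by (rule eq_sym[OF stl_eq.add_assoc])
  finally show ?thesis .
qed

lemma smsm: "Sm k (Sm l x) \<approx> Sm (k * l) x" by (rule eq_sym[OF stl_eq.sm_mult])

lemma solve:
  assumes "Ad X Q \<approx> Z" shows "X \<approx> Ad Z (Sm (-1) Q)"
proof -
  have "X \<approx> Ad X Zr" by (rule eq_sym[OF stl_eq.add_zero])
  also have "\<dots> \<approx> Ad X (Ad Q (Sm (-1) Q))" by (intro ad_cong eq_refl eq_sym[OF stl_eq.add_neg])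
  also have "\<dots> \<approx> Ad (Ad X Q) (Sm (-1) Q)" by (rule eq_sym[OF stl_eq.add_assoc])
  also have "\<dots> \<approx> Ad Z (Sm (-1) Q)" by (intro ad_cong assms eq_refl)
  finally show ?thesis .
qed

lemma sm_ad: "Sm k (Ad x y) \<approx> Ad (Sm k x) (Sm k y)" by (rule stl_eq.sm_add)

lemma gensm: "i < NN \<Longrightarrow> j < NN \<Longrightarrow> i \<noteq> j \<Longrightarrow> Sm k (Gen i j a) \<approx> Gen i j (smul k a)"
  by (rule eq_sym[OF stl_eq.rel1_sm])
lemma genadd: "i < NN \<Longrightarrow> j < NN \<Longrightarrow> i \<noteq> j \<Longrightarrow> Ad (Gen i j a) (Gen i j b) \<approx> Gen i j (a + b)"
  by (rule eq_sym[OF stl_eq.rel1_add])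
lemma gen0: "i < NN \<Longrightarrow> j < NN \<Longrightarrow> i \<noteq> j \<Longrightarrow> Gen i j 0 \<approx> Zr"
proof -
  assume h: "i < NN" "j < NN" "i \<noteq> j"
  have "Gen i j 0 = Gen i j (smul 0 0)" by (simp add: sm_zero_l)
  also have "\<dots> \<approx> Sm 0 (Gen i j 0)" using h by (rule stl_eq.rel1_sm)
  also have "\<dots> \<approx> Zr" by (rule sm0)
  finally show ?thesis .
qed

lemma leib_left:
  assumes "hdeg m t False" "hdeg m b db" "hdeg m c dc"
  shows "Br t (Br b c) \<approx> Ad (Br (Br t b) c) (Br b (Br t c))"
proof -
  have "Br (Br t b) c \<approx> Ad (Br t (Br b c)) (Sm (- sgn (False \<and> db)) (Br b (Br t c)))"
    by (rule stl_eq.leibniz[OF assms])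
  hence "Ad (Br t (Br b c)) (Sm (-1) (Br b (Br t c))) \<approx> Br (Br t b) c"
    by (simp add: sgn_def eq_sym)
  hence "Br t (Br b c) \<approx> Ad (Br (Br t b) c) (Sm (-1) (Sm (-1) (Br b (Br t c))))" by (rule solve)
  also have "\<dots> \<approx> Ad (Br (Br t b) c) (Br b (Br t c))"
  proof (intro ad_cong eq_refl)
    have "Sm (-1) (Sm (-1) (Br b (Br t c))) \<approx> Sm ((-1) * (-1)) (Br b (Br t c))" by (rule smsm)
    also have "\<dots> = Sm 1 (Br b (Br t c))" by simp
    also have "\<dots> \<approx> Br b (Br t c)" by (rule stl_eq.sm_one)
    finally show "Sm (-1) (Sm (-1) (Br b (Br t c))) \<approx> Br b (Br t c)" .
  qed
  finally show ?thesis .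
qed

lemma hgen: "hdeg m (Gen i j a) (tau m i j)" by (rule hdeg.intros(1))

definition Lft where
  "Lft t \<longleftrightarrow> (\<forall>k l c. k < NN \<longrightarrow> l < NN \<longrightarrow> k \<noteq> l \<longrightarrow>
      Br t (Gen k l c) \<approx> Gen k l (ps t k k * c - c * ps t l l))"
definition Rgt where
  "Rgt t \<longleftrightarrow> (\<forall>k l c. k < NN \<longrightarrow> l < NN \<longrightarrow> k \<noteq> l \<longrightarrow>
      Br (Gen k l c) t \<approx> Gen k l (c * ps t l l - ps t k k * c))"

lemma lft_trans:
  assumes t: "hdeg m t False" and kl: "k < NN" "l < NN" "p < NN" "k \<noteq> l" "k \<noteq> p" "p \<noteq> l"
    and h1: "\<And>c. Br t (Gen k p c) \<approx> Gen k p (ps t k k * c - c * ps t p p)"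
    and h2: "\<And>c. Br t (Gen p l c) \<approx> Gen p l (ps t p p * c - c * ps t l l)"
  shows "Br t (Gen k l c) \<approx> Gen k l (ps t k k * c - c * ps t l l)"
proof -
  let ?D = "\<lambda>r. ps t r r"
  have "Gen k l c = Gen k l (c * 1)" by simp
  also have "\<dots> \<approx> Br (Gen k p c) (Gen p l 1)" using kl by (intro eq_sym[OF stl_eq.rel3]) auto
  finally have g: "Gen k l c \<approx> Br (Gen k p c) (Gen p l 1)" .
  have "Br t (Gen k l c) \<approx> Br t (Br (Gen k p c) (Gen p l 1))" by (intro br_cong eq_refl g)
  also have "\<dots> \<approx> Ad (Br (Br t (Gen k p c)) (Gen p l 1)) (Br (Gen k p c) (Br t (Gen p l 1)))"
    by (rule leib_left[OF t hgen hgen])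
  also have "\<dots> \<approx> Ad (Br (Gen k p (?D k * c - c * ?D p)) (Gen p l 1)) (Br (Gen k p c) (Gen p l (?D p * 1 - 1 * ?D l)))"
    by (intro ad_cong br_cong eq_refl h1 h2)
  also have "\<dots> \<approx> Ad (Gen k l ((?D k * c - c * ?D p) * 1)) (Gen k l (c * (?D p * 1 - 1 * ?D l)))"
    using kl by (intro ad_cong stl_eq.rel3) auto
  also have "\<dots> \<approx> Gen k l ((?D k * c - c * ?D p) * 1 + c * (?D p * 1 - 1 * ?D l))"
    using kl by (intro genadd)
  also have "\<dots> = Gen k l (?D k * c - c * ?D l)" by (simp add: algebra_simps)
  finally show ?thesis .
qed

lemma rgt_trans:
  assumes t: "hdeg m t False" and kl: "k < NN" "l < NN" "p < NN" "k \<noteq> l" "k \<noteq> p" "p \<noteq> l"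
    and h1: "\<And>c. Br (Gen k p c) t \<approx> Gen k p (c * ps t p p - ps t k k * c)"
    and h2: "\<And>c. Br (Gen p l c) t \<approx> Gen p l (c * ps t l l - ps t p p * c)"
  shows "Br (Gen k l c) t \<approx> Gen k l (c * ps t l l - ps t k k * c)"
proof -
  let ?D = "\<lambda>r. ps t r r"
  let ?s = "- sgn (tau m k p \<and> tau m p l) :: 'k"
  let ?s' = "- sgn (tau m p l \<and> tau m k p) :: 'k"
  have "Gen k l c = Gen k l (c * 1)" by simp
  also have "\<dots> \<approx> Br (Gen k p c) (Gen p l 1)" using kl by (intro eq_sym[OF stl_eq.rel3]) auto
  finally have g: "Gen k l c \<approx> Br (Gen k p c) (Gen p l 1)" .
  have "Br (Gen k l c) t \<approx> Br (Br (Gen k p c) (Gen p l 1)) t" by (intro br_cong eq_refl g)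
  also have "\<dots> \<approx> Ad (Br (Gen k p c) (Br (Gen p l 1) t)) (Sm ?s (Br (Gen p l 1) (Br (Gen k p c) t)))"
    by (rule stl_eq.leibniz[OF hgen hgen t])
  also have "\<dots> \<approx> Ad (Br (Gen k p c) (Gen p l (1 * ?D l - ?D p * 1))) (Sm ?s (Br (Gen p l 1) (Gen k p (c * ?D p - ?D k * c))))"
    by (intro ad_cong sm_cong br_cong eq_refl h1 h2)
  also have "\<dots> \<approx> Ad (Gen k l (c * (1 * ?D l - ?D p * 1))) (Sm ?s (Sm ?s' (Gen k l ((c * ?D p - ?D k * c) * 1))))"
    using kl by (intro ad_cong sm_cong stl_eq.rel3 stl_eq.rel4) auto
  also have "\<dots> \<approx> Ad (Gen k l (c * (1 * ?D l - ?D p * 1))) (Gen k l (smul ?s (smul ?s' ((c * ?D p - ?D k * c) * 1))))"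
  proof (intro ad_cong eq_refl)
    have "Sm ?s (Sm ?s' (Gen k l ((c * ?D p - ?D k * c) * 1))) \<approx> Sm ?s (Gen k l (smul ?s' ((c * ?D p - ?D k * c) * 1)))"
      using kl by (intro sm_cong gensm) auto
    also have "\<dots> \<approx> Gen k l (smul ?s (smul ?s' ((c * ?D p - ?D k * c) * 1)))"
      using kl by (intro gensm) auto
    finally show "Sm ?s (Sm ?s' (Gen k l ((c * ?D p - ?D k * c) * 1))) \<approx> Gen k l (smul ?s (smul ?s' ((c * ?D p - ?D k * c) * 1)))" .
  qed
  also have "\<dots> \<approx> Gen k l (c * (1 * ?D l - ?D p * 1) + smul ?s (smul ?s' ((c * ?D p - ?D k * c) * 1)))"
    using kl by (intro genadd)
  also have "\<dots> = Gen k l (c * ?D l - ?D k * c)"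
    by (simp add: sm_msgn conj_commute algebra_simps)
  finally show ?thesis .
qed


lemma z1: "Sm k (Br x Zr) \<approx> Zr"
proof -
  have "Sm k (Br x Zr) \<approx> Sm k Zr" by (intro sm_cong brZr)
  also have "\<dots> \<approx> Zr" by (rule smZr)
  finally show ?thesis .
qed
lemma z2: "Sm k (Sm k' (Br x Zr)) \<approx> Zr"
proof -
  have "Sm k (Sm k' (Br x Zr)) \<approx> Sm k Zr" by (intro sm_cong z1)
  also have "\<dots> \<approx> Zr" by (rule smZr)
  finally show ?thesis .
qed
lemma z3: "Br x Zr \<approx> Zr" by (rule brZr)

lemma sm2gen: "p < NN \<Longrightarrow> q < NN \<Longrightarrow> p \<noteq> q \<Longrightarrow>
  Sm k1 (Sm k2 (Gen p q x)) \<approx> Gen p q (smul k1 (smul k2 x))"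
  by (meson eq_trans gensm sm_cong)
lemma sm3gen: "p < NN \<Longrightarrow> q < NN \<Longrightarrow> p \<noteq> q \<Longrightarrow>
  Sm k1 (Sm k2 (Sm k3 (Gen p q x))) \<approx> Gen p q (smul k1 (smul k2 (smul k3 x)))"
  by (meson eq_trans gensm sm_cong)

lemma adz: "x \<approx> x' \<Longrightarrow> y \<approx> Zr \<Longrightarrow> Ad x y \<approx> x'"
  by (meson ad_cong eq_trans stl_eq.add_zero)
lemma zad: "x \<approx> Zr \<Longrightarrow> y \<approx> y' \<Longrightarrow> Ad x y \<approx> y'"
  by (meson ad_cong eq_trans addZl)

definition Dh :: "nat \<Rightarrow> nat \<Rightarrow> 'a \<Rightarrow> 'a \<Rightarrow> nat \<Rightarrow> 'a" where
  "Dh i j a b r = (if r = i then a * b else 0) + (if r = j then (if tau m i j then b * a else - (b * a)) else 0)"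

lemma psi_h:
  assumes "i < NN" "j < NN" "i \<noteq> j"
  shows "ps (Br (Gen i j a) (Gen j i b)) r s = (if r = s then Dh i j a b r else 0)"
proof -
  have e: "ps (Br (Gen i j a) (Gen j i b)) r s = sbr m n (E i j a) (E j i b) r s" by simp
  show ?thesis unfolding e sbr_E using assms by (auto simp: E_def Dh_def tau_sym)
qed

lemma leibh: "Br (Br (Gen i j a) (Gen j i b)) (Gen k l c) \<approx>
   Ad (Br (Gen i j a) (Br (Gen j i b) (Gen k l c)))
      (Sm (- sgn (tau m i j \<and> tau m j i)) (Br (Gen j i b) (Br (Gen i j a) (Gen k l c))))"
  by (rule stl_eq.leibniz[OF hgen hgen hgen])

lemma hL1:
  assumes "i < NN" "j < NN" "k < NN" "l < NN" "i \<noteq> j" "k \<noteq> l" "k \<noteq> i" "k \<noteq> j" "l \<noteq> i" "l \<noteq> j"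
  shows "Br (Br (Gen i j a) (Gen j i b)) (Gen k l c) \<approx> Gen k l (Dh i j a b k * c - c * Dh i j a b l)"
proof -
  have "Br (Br (Gen i j a) (Gen j i b)) (Gen k l c) \<approx> Ad (Br (Gen i j a) Zr) (Sm (- sgn (tau m i j \<and> tau m j i)) (Br (Gen j i b) Zr))"
    using leibh by (rule eq_trans) (use assms in \<open>intro ad_cong sm_cong br_cong eq_refl stl_eq.rel2; auto\<close>)
  also have "\<dots> \<approx> Zr" by (intro zad z1 z3)
  also have "\<dots> \<approx> Gen k l 0" using assms by (intro eq_sym[OF gen0]) auto
  also have "\<dots> = Gen k l (Dh i j a b k * c - c * Dh i j a b l)" using assms by (simp add: Dh_def)
  finally show ?thesis .
qed

lemma hL2:
  assumes "i < NN" "j < NN" "l < NN" "i \<noteq> j" "l \<noteq> i" "l \<noteq> j"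
  shows "Br (Br (Gen i j a) (Gen j i b)) (Gen i l c) \<approx> Gen i l (Dh i j a b i * c - c * Dh i j a b l)"
proof -
  have "Br (Br (Gen i j a) (Gen j i b)) (Gen i l c) \<approx> Ad (Br (Gen i j a) (Gen j l (b * c))) (Sm (- sgn (tau m i j \<and> tau m j i)) (Br (Gen j i b) Zr))"
    using leibh by (rule eq_trans) (use assms in \<open>intro ad_cong sm_cong br_cong eq_refl stl_eq.rel2 stl_eq.rel3; auto\<close>)
  also have "\<dots> \<approx> Gen i l (a * (b * c))" using assms by (intro adz z1 stl_eq.rel3) auto
  also have "\<dots> = Gen i l (Dh i j a b i * c - c * Dh i j a b l)" using assms by (simp add: Dh_def mult.assoc)
  finally show ?thesis .
qed

lemma hL3:
  assumes "i < NN" "j < NN" "l < NN" "i \<noteq> j" "l \<noteq> i" "l \<noteq> j"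
  shows "Br (Br (Gen i j a) (Gen j i b)) (Gen j l c) \<approx> Gen j l (Dh i j a b j * c - c * Dh i j a b l)"
proof -
  let ?s = "- sgn (tau m i j \<and> tau m j i) :: 'k"
  have "Br (Br (Gen i j a) (Gen j i b)) (Gen j l c) \<approx> Ad (Br (Gen i j a) Zr) (Sm ?s (Br (Gen j i b) (Gen i l (a * c))))"
    using leibh by (rule eq_trans) (use assms in \<open>intro ad_cong sm_cong br_cong eq_refl stl_eq.rel2 stl_eq.rel3; auto\<close>)
  also have "\<dots> \<approx> Sm ?s (Gen j l (b * (a * c)))" using assms by (intro zad z3 sm_cong stl_eq.rel3) auto
  also have "\<dots> \<approx> Gen j l (smul ?s (b * (a * c)))" using assms by (intro gensm) auto
  also have "\<dots> = Gen j l (Dh i j a b j * c - c * Dh i j a b l)" using assms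
    by (simp add: Dh_def sm_msgn tau_sym mult.assoc)
  finally show ?thesis .
qed

lemma hL4:
  assumes "i < NN" "j < NN" "k < NN" "i \<noteq> j" "k \<noteq> i" "k \<noteq> j"
  shows "Br (Br (Gen i j a) (Gen j i b)) (Gen k i c) \<approx> Gen k i (Dh i j a b k * c - c * Dh i j a b i)"
proof -
  let ?s = "- sgn (tau m i j \<and> tau m j i) :: 'k"
  let ?s1 = "- sgn (tau m i j \<and> tau m k i) :: 'k"
  let ?s2 = "- sgn (tau m j i \<and> tau m k j) :: 'k"
  have "Br (Br (Gen i j a) (Gen j i b)) (Gen k i c) \<approx> Ad (Br (Gen i j a) Zr) (Sm ?s (Br (Gen j i b) (Sm ?s1 (Gen k j (c * a)))))"
    using leibh by (rule eq_trans) (use assms in \<open>intro ad_cong sm_cong br_cong eq_refl stl_eq.rel2 stl_eq.rel4; auto\<close>)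
  also have "\<dots> \<approx> Sm ?s (Sm ?s1 (Br (Gen j i b) (Gen k j (c * a))))" by (intro zad z3 sm_cong stl_eq.br_sm_right)
  also have "\<dots> \<approx> Sm ?s (Sm ?s1 (Sm ?s2 (Gen k i (c * a * b))))" using assms by (intro sm_cong stl_eq.rel4) auto
  also have "\<dots> \<approx> Gen k i (smul ?s (smul ?s1 (smul ?s2 (c * a * b))))" using assms by (intro sm3gen) auto
  also have "\<dots> = Gen k i (Dh i j a b k * c - c * Dh i j a b i)" using assms
    by (cases "i < m"; cases "j < m"; cases "k < m") (simp_all add: Dh_def sm_msgn tau_def mult.assoc)
  finally show ?thesis .
qed

lemma hL5:
  assumes "i < NN" "j < NN" "k < NN" "i \<noteq> j" "k \<noteq> i" "k \<noteq> j"
  shows "Br (Br (Gen i j a) (Gen j i b)) (Gen k j c) \<approx> Gen k j (Dh i j a b k * c - c * Dh i j a b j)"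
proof -
  let ?s = "- sgn (tau m i j \<and> tau m j i) :: 'k"
  let ?s1 = "- sgn (tau m i j \<and> tau m k i) :: 'k"
  let ?s2 = "- sgn (tau m j i \<and> tau m k j) :: 'k"
  have "Br (Br (Gen i j a) (Gen j i b)) (Gen k j c) \<approx> Ad (Br (Gen i j a) (Sm ?s2 (Gen k i (c * b)))) (Sm ?s (Br (Gen j i b) Zr))"
    using leibh by (rule eq_trans) (use assms in \<open>intro ad_cong sm_cong br_cong eq_refl stl_eq.rel2 stl_eq.rel4; auto\<close>)
  also have "\<dots> \<approx> Sm ?s2 (Br (Gen i j a) (Gen k i (c * b)))" by (intro adz z1 stl_eq.br_sm_right)
  also have "\<dots> \<approx> Sm ?s2 (Sm ?s1 (Gen k j (c * b * a)))" using assms by (intro sm_cong stl_eq.rel4) auto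
  also have "\<dots> \<approx> Gen k j (smul ?s2 (smul ?s1 (c * b * a)))" using assms by (intro sm2gen) auto
  also have "\<dots> = Gen k j (Dh i j a b k * c - c * Dh i j a b j)" using assms
    by (cases "i < m"; cases "j < m"; cases "k < m") (simp_all add: Dh_def sm_msgn tau_def mult.assoc)
  finally show ?thesis .
qed


lemma solveR: "Br (Gen k l c) (Br (Gen i j a) (Gen j i b)) \<approx>
   Ad (Br (Br (Gen k l c) (Gen i j a)) (Gen j i b))
      (Sm (-1) (Sm (- sgn (tau m k l \<and> tau m i j)) (Br (Gen i j a) (Br (Gen k l c) (Gen j i b)))))"
  by (rule solve[OF eq_sym[OF stl_eq.leibniz[OF hgen hgen hgen]]])

lemma hR1:
  assumes "i < NN" "j < NN" "k < NN" "l < NN" "i \<noteq> j" "k \<noteq> l" "k \<noteq> i" "k \<noteq> j" "l \<noteq> i" "l \<noteq> j"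
  shows "Br (Gen k l c) (Br (Gen i j a) (Gen j i b)) \<approx> Gen k l (c * Dh i j a b l - Dh i j a b k * c)"
proof -
  let ?s = "- sgn (tau m k l \<and> tau m i j) :: 'k"
  have "Br (Gen k l c) (Br (Gen i j a) (Gen j i b)) \<approx> Ad (Br Zr (Gen j i b)) (Sm (-1) (Sm ?s (Br (Gen i j a) Zr)))"
    using solveR by (rule eq_trans) (use assms in \<open>intro ad_cong sm_cong br_cong eq_refl stl_eq.rel2; auto\<close>)
  also have "\<dots> \<approx> Zr" by (intro zad brZl z2)
  also have "\<dots> \<approx> Gen k l 0" using assms by (intro eq_sym[OF gen0]) auto
  also have "\<dots> = Gen k l (c * Dh i j a b l - Dh i j a b k * c)" using assms by (simp add: Dh_def)
  finally show ?thesis .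
qed

lemma hR2:
  assumes "i < NN" "j < NN" "l < NN" "i \<noteq> j" "l \<noteq> i" "l \<noteq> j"
  shows "Br (Gen i l c) (Br (Gen i j a) (Gen j i b)) \<approx> Gen i l (c * Dh i j a b l - Dh i j a b i * c)"
proof -
  let ?s = "- sgn (tau m i l \<and> tau m i j) :: 'k"
  let ?s1 = "- sgn (tau m i l \<and> tau m j i) :: 'k"
  have "Br (Gen i l c) (Br (Gen i j a) (Gen j i b)) \<approx> Ad (Br Zr (Gen j i b)) (Sm (-1) (Sm ?s (Br (Gen i j a) (Sm ?s1 (Gen j l (b * c))))))"
    using solveR by (rule eq_trans) (use assms in \<open>intro ad_cong sm_cong br_cong eq_refl stl_eq.rel2 stl_eq.rel4; auto\<close>)
  also have "\<dots> \<approx> Sm (-1) (Sm ?s (Sm ?s1 (Br (Gen i j a) (Gen j l (b * c)))))" by (intro zad brZl sm_cong stl_eq.br_sm_right)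
  also have "\<dots> \<approx> Sm (-1) (Sm ?s (Sm ?s1 (Gen i l (a * (b * c)))))" using assms by (intro sm_cong stl_eq.rel3) auto
  also have "\<dots> \<approx> Gen i l (smul (-1) (smul ?s (smul ?s1 (a * (b * c)))))" using assms by (intro sm3gen) auto
  also have "\<dots> = Gen i l (c * Dh i j a b l - Dh i j a b i * c)" using assms
    by (cases "i < m"; cases "j < m"; cases "l < m") (simp_all add: Dh_def sm_msgn sm_minus_one tau_def mult.assoc)
  finally show ?thesis .
qed

lemma hR3:
  assumes "i < NN" "j < NN" "l < NN" "i \<noteq> j" "l \<noteq> i" "l \<noteq> j"
  shows "Br (Gen j l c) (Br (Gen i j a) (Gen j i b)) \<approx> Gen j l (c * Dh i j a b l - Dh i j a b j * c)"
proof -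
  let ?s = "- sgn (tau m j l \<and> tau m i j) :: 'k"
  let ?s1 = "- sgn (tau m j l \<and> tau m i j) :: 'k"
  let ?s2 = "- sgn (tau m i l \<and> tau m j i) :: 'k"
  have "Br (Gen j l c) (Br (Gen i j a) (Gen j i b)) \<approx> Ad (Br (Sm ?s1 (Gen i l (a * c))) (Gen j i b)) (Sm (-1) (Sm ?s (Br (Gen i j a) Zr)))"
    using solveR by (rule eq_trans) (use assms in \<open>intro ad_cong sm_cong br_cong eq_refl stl_eq.rel2 stl_eq.rel4; auto\<close>)
  also have "\<dots> \<approx> Sm ?s1 (Br (Gen i l (a * c)) (Gen j i b))" by (intro adz z2 stl_eq.br_sm_left)
  also have "\<dots> \<approx> Sm ?s1 (Sm ?s2 (Gen j l (b * (a * c))))" using assms by (intro sm_cong stl_eq.rel4) auto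
  also have "\<dots> \<approx> Gen j l (smul ?s1 (smul ?s2 (b * (a * c))))" using assms by (intro sm2gen) auto
  also have "\<dots> = Gen j l (c * Dh i j a b l - Dh i j a b j * c)" using assms
    by (cases "i < m"; cases "j < m"; cases "l < m") (simp_all add: Dh_def sm_msgn sm_minus_one tau_def mult.assoc)
  finally show ?thesis .
qed

lemma hR4:
  assumes "i < NN" "j < NN" "k < NN" "i \<noteq> j" "k \<noteq> i" "k \<noteq> j"
  shows "Br (Gen k i c) (Br (Gen i j a) (Gen j i b)) \<approx> Gen k i (c * Dh i j a b i - Dh i j a b k * c)"
proof -
  let ?s = "- sgn (tau m k i \<and> tau m i j) :: 'k"
  have "Br (Gen k i c) (Br (Gen i j a) (Gen j i b)) \<approx> Ad (Br (Gen k j (c * a)) (Gen j i b)) (Sm (-1) (Sm ?s (Br (Gen i j a) Zr)))"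
    using solveR by (rule eq_trans) (use assms in \<open>intro ad_cong sm_cong br_cong eq_refl stl_eq.rel2 stl_eq.rel3; auto\<close>)
  also have "\<dots> \<approx> Gen k i (c * a * b)" using assms by (intro adz z2 stl_eq.rel3) auto
  also have "\<dots> = Gen k i (c * Dh i j a b i - Dh i j a b k * c)" using assms
    by (simp add: Dh_def mult.assoc)
  finally show ?thesis .
qed

lemma hR5:
  assumes "i < NN" "j < NN" "k < NN" "i \<noteq> j" "k \<noteq> i" "k \<noteq> j"
  shows "Br (Gen k j c) (Br (Gen i j a) (Gen j i b)) \<approx> Gen k j (c * Dh i j a b j - Dh i j a b k * c)"
proof -
  let ?s = "- sgn (tau m k j \<and> tau m i j) :: 'k"
  let ?s1 = "- sgn (tau m i j \<and> tau m k i) :: 'k"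
  have "Br (Gen k j c) (Br (Gen i j a) (Gen j i b)) \<approx> Ad (Br Zr (Gen j i b)) (Sm (-1) (Sm ?s (Br (Gen i j a) (Gen k i (c * b)))))"
    using solveR by (rule eq_trans) (use assms in \<open>intro ad_cong sm_cong br_cong eq_refl stl_eq.rel2 stl_eq.rel3; auto\<close>)
  also have "\<dots> \<approx> Sm (-1) (Sm ?s (Sm ?s1 (Gen k j (c * b * a))))" using assms by (intro zad brZl sm_cong stl_eq.rel4) auto
  also have "\<dots> \<approx> Gen k j (smul (-1) (smul ?s (smul ?s1 (c * b * a))))" using assms by (intro sm3gen) auto
  also have "\<dots> = Gen k j (c * Dh i j a b j - Dh i j a b k * c)" using assms
    by (cases "i < m"; cases "j < m"; cases "k < m") (simp_all add: Dh_def sm_msgn sm_minus_one tau_def mult.assoc)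
  finally show ?thesis .
qed


lemma hdeg_h: "hdeg m (Br (Gen i j a) (Gen j i b)) False"
proof -
  have "hdeg m (Br (Gen i j a) (Gen j i b)) (tau m i j \<noteq> tau m j i)" by (intro hdeg.intros(5) hgen)
  thus ?thesis by (simp add: tau_sym)
qed

lemma third:
  assumes "3 \<le> NN" "i < NN" "j < NN"
  obtains p where "p < NN" "p \<noteq> i" "p \<noteq> j"
proof -
  let ?p = "if i \<noteq> 0 \<and> j \<noteq> 0 then 0 else if i \<noteq> 1 \<and> j \<noteq> 1 then 1 else (2::nat)"
  have "?p < NN" "?p \<noteq> i" "?p \<noteq> j" using assms by auto
  thus ?thesis using that by blast
qed

lemma h_nt_L:
  assumes "i < NN" "j < NN" "i \<noteq> j" "k < NN" "l < NN" "k \<noteq> l" "\<not> (k = i \<and> l = j)" "\<not> (k = j \<and> l = i)"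
  shows "Br (Br (Gen i j a) (Gen j i b)) (Gen k l c) \<approx>
     Gen k l (ps (Br (Gen i j a) (Gen j i b)) k k * c - c * ps (Br (Gen i j a) (Gen j i b)) l l)"
proof -
  have "Br (Br (Gen i j a) (Gen j i b)) (Gen k l c) \<approx> Gen k l (Dh i j a b k * c - c * Dh i j a b l)"
  proof -
    consider "k = i" | "k = j" | "l = i" | "l = j" | "k \<noteq> i" "k \<noteq> j" "l \<noteq> i" "l \<noteq> j" by blast
    thus ?thesis
    proof cases
      case 1 thus ?thesis using assms hL2[of i j l a b c] by auto
    next
      case 2 thus ?thesis using assms hL3[of i j l a b c] by auto
    next
      case 3 thus ?thesis using assms hL4[of i j k a b c] by auto
    next
      case 4 thus ?thesis using assms hL5[of i j k a b c] by auto
    next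
      case 5 thus ?thesis using assms hL1[of i j k l a b c] by auto
    qed
  qed
  moreover have "\<And>r. ps (Br (Gen i j a) (Gen j i b)) r r = Dh i j a b r"
    by (subst psi_h[OF assms(1-3)]) simp
  ultimately show ?thesis by simp
qed

lemma h_nt_R:
  assumes "i < NN" "j < NN" "i \<noteq> j" "k < NN" "l < NN" "k \<noteq> l" "\<not> (k = i \<and> l = j)" "\<not> (k = j \<and> l = i)"
  shows "Br (Gen k l c) (Br (Gen i j a) (Gen j i b)) \<approx>
     Gen k l (c * ps (Br (Gen i j a) (Gen j i b)) l l - ps (Br (Gen i j a) (Gen j i b)) k k * c)"
proof -
  have "Br (Gen k l c) (Br (Gen i j a) (Gen j i b)) \<approx> Gen k l (c * Dh i j a b l - Dh i j a b k * c)"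
  proof -
    consider "k = i" | "k = j" | "l = i" | "l = j" | "k \<noteq> i" "k \<noteq> j" "l \<noteq> i" "l \<noteq> j" by blast
    thus ?thesis
    proof cases
      case 1 thus ?thesis using assms hR2[of i j l c a b] by auto
    next
      case 2 thus ?thesis using assms hR3[of i j l c a b] by auto
    next
      case 3 thus ?thesis using assms hR4[of i j k c a b] by auto
    next
      case 4 thus ?thesis using assms hR5[of i j k c a b] by auto
    next
      case 5 thus ?thesis using assms hR1[of i j k l c a b] by auto
    qed
  qed
  moreover have "\<And>r. ps (Br (Gen i j a) (Gen j i b)) r r = Dh i j a b r"
    by (subst psi_h[OF assms(1-3)]) simp
  ultimately show ?thesis by simp
qed

lemma h_LR:
  assumes N3: "3 \<le> NN" and ij: "i < NN" "j < NN" "i \<noteq> j"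
  shows "Lft (Br (Gen i j a) (Gen j i b)) \<and> Rgt (Br (Gen i j a) (Gen j i b))"
proof -
  let ?h = "Br (Gen i j a) (Gen j i b)"
  obtain p where p: "p < NN" "p \<noteq> i" "p \<noteq> j" using third[OF N3 ij(1,2)] by blast
  have L: "Br ?h (Gen k l c) \<approx> Gen k l (ps ?h k k * c - c * ps ?h l l)"
    if kl: "k < NN" "l < NN" "k \<noteq> l" for k l c
  proof (cases "(k = i \<and> l = j) \<or> (k = j \<and> l = i)")
    case False thus ?thesis using h_nt_L[OF ij kl] by blast
  next
    case True
    show ?thesis
    proof (rule lft_trans[OF hdeg_h kl(1,2) p(1) kl(3)])
      show "k \<noteq> p" "p \<noteq> l" using True p by auto
      show "Br ?h (Gen k p c) \<approx> Gen k p (ps ?h k k * c - c * ps ?h p p)" for c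
        using True p kl by (intro h_nt_L[OF ij]) auto
      show "Br ?h (Gen p l c) \<approx> Gen p l (ps ?h p p * c - c * ps ?h l l)" for c
        using True p kl by (intro h_nt_L[OF ij]) auto
    qed
  qed
  have R: "Br (Gen k l c) ?h \<approx> Gen k l (c * ps ?h l l - ps ?h k k * c)"
    if kl: "k < NN" "l < NN" "k \<noteq> l" for k l c
  proof (cases "(k = i \<and> l = j) \<or> (k = j \<and> l = i)")
    case False thus ?thesis using h_nt_R[OF ij kl] by blast
  next
    case True
    show ?thesis
    proof (rule rgt_trans[OF hdeg_h kl(1,2) p(1) kl(3)])
      show "k \<noteq> p" "p \<noteq> l" using True p by auto
      show "Br (Gen k p c) ?h \<approx> Gen k p (c * ps ?h p p - ps ?h k k * c)" for c
        using True p kl by (intro h_nt_R[OF ij]) auto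
      show "Br (Gen p l c) ?h \<approx> Gen p l (c * ps ?h l l - ps ?h p p * c)" for c
        using True p kl by (intro h_nt_R[OF ij]) auto
    qed
  qed
  show ?thesis unfolding Lft_def Rgt_def using L R by blast
qed


inductive Vs :: "('k, 'a) tm \<Rightarrow> bool" where
  vgen: "i < NN \<Longrightarrow> j < NN \<Longrightarrow> i \<noteq> j \<Longrightarrow> Vs (Gen i j a)"
| vzr: "Vs Zr"
| vad: "Vs x \<Longrightarrow> Vs y \<Longrightarrow> Vs (Ad x y)"
| vsm: "Vs x \<Longrightarrow> Vs (Sm k x)"

inductive Hs :: "('k, 'a) tm \<Rightarrow> bool" where
  hh: "i < NN \<Longrightarrow> j < NN \<Longrightarrow> i \<noteq> j \<Longrightarrow> Hs (Br (Gen i j a) (Gen j i b))"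
| hzr: "Hs Zr"
| had: "Hs x \<Longrightarrow> Hs y \<Longrightarrow> Hs (Ad x y)"
| hsm: "Hs x \<Longrightarrow> Hs (Sm k x)"

lemma Hs_props:
  assumes N3: "3 \<le> NN"
  shows "Hs t \<Longrightarrow> hdeg m t False \<and> Lft t \<and> Rgt t \<and> (\<forall>r s. r \<noteq> s \<longrightarrow> ps t r s = 0)"
proof (induction t rule: Hs.induct)
  case (hh i j a b)
  thus ?case using hdeg_h h_LR[OF N3 hh] psi_h[OF hh] by auto
next
  case hzr
  have "Lft Zr" unfolding Lft_def
  proof (intro allI impI)
    fix k l c assume kl: "k < NN" "l < NN" "k \<noteq> l"
    have "Br Zr (Gen k l c) \<approx> Zr" by (rule brZl)
    also have "\<dots> \<approx> Gen k l 0" using kl by (intro eq_sym[OF gen0])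
    also have "\<dots> = Gen k l (ps Zr k k * c - c * ps Zr l l)" by simp
    finally show "Br Zr (Gen k l c) \<approx> Gen k l (ps Zr k k * c - c * ps Zr l l)" .
  qed
  moreover have "Rgt Zr" unfolding Rgt_def
  proof (intro allI impI)
    fix k l c assume kl: "k < NN" "l < NN" "k \<noteq> l"
    have "Br (Gen k l c) Zr \<approx> Zr" by (rule brZr)
    also have "\<dots> \<approx> Gen k l 0" using kl by (intro eq_sym[OF gen0])
    also have "\<dots> = Gen k l (c * ps Zr l l - ps Zr k k * c)" by simp
    finally show "Br (Gen k l c) Zr \<approx> Gen k l (c * ps Zr l l - ps Zr k k * c)" .
  qed
  ultimately show ?case by (simp add: hdeg.intros(2))
next
  case (had x y)
  have "Lft (Ad x y)" unfolding Lft_def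
  proof (intro allI impI)
    fix k l c assume kl: "k < NN" "l < NN" "k \<noteq> l"
    have "Br (Ad x y) (Gen k l c) \<approx> Ad (Br x (Gen k l c)) (Br y (Gen k l c))" by (rule stl_eq.br_add_left)
    also have "\<dots> \<approx> Ad (Gen k l (ps x k k * c - c * ps x l l)) (Gen k l (ps y k k * c - c * ps y l l))"
      using had.IH kl unfolding Lft_def by (intro ad_cong) auto
    also have "\<dots> \<approx> Gen k l ((ps x k k * c - c * ps x l l) + (ps y k k * c - c * ps y l l))"
      using kl by (intro genadd)
    also have "\<dots> = Gen k l (ps (Ad x y) k k * c - c * ps (Ad x y) l l)" by (simp add: algebra_simps)
    finally show "Br (Ad x y) (Gen k l c) \<approx> Gen k l (ps (Ad x y) k k * c - c * ps (Ad x y) l l)" .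
  qed
  moreover have "Rgt (Ad x y)" unfolding Rgt_def
  proof (intro allI impI)
    fix k l c assume kl: "k < NN" "l < NN" "k \<noteq> l"
    have "Br (Gen k l c) (Ad x y) \<approx> Ad (Br (Gen k l c) x) (Br (Gen k l c) y)" by (rule stl_eq.br_add_right)
    also have "\<dots> \<approx> Ad (Gen k l (c * ps x l l - ps x k k * c)) (Gen k l (c * ps y l l - ps y k k * c))"
      using had.IH kl unfolding Rgt_def by (intro ad_cong) auto
    also have "\<dots> \<approx> Gen k l ((c * ps x l l - ps x k k * c) + (c * ps y l l - ps y k k * c))"
      using kl by (intro genadd)
    also have "\<dots> = Gen k l (c * ps (Ad x y) l l - ps (Ad x y) k k * c)" by (simp add: algebra_simps)
    finally show "Br (Gen k l c) (Ad x y) \<approx> Gen k l (c * ps (Ad x y) l l - ps (Ad x y) k k * c)" .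
  qed
  ultimately show ?case using had.IH by (simp add: hdeg.intros(3))
next
  case (hsm x k)
  have "Lft (Sm k x)" unfolding Lft_def
  proof (intro allI impI)
    fix k' l c assume kl: "k' < NN" "l < NN" "k' \<noteq> l"
    have "Br (Sm k x) (Gen k' l c) \<approx> Sm k (Br x (Gen k' l c))" by (rule stl_eq.br_sm_left)
    also have "\<dots> \<approx> Sm k (Gen k' l (ps x k' k' * c - c * ps x l l))"
      using hsm.IH kl unfolding Lft_def by (intro sm_cong) auto
    also have "\<dots> \<approx> Gen k' l (smul k (ps x k' k' * c - c * ps x l l))"
      using kl by (intro gensm)
    also have "\<dots> = Gen k' l (ps (Sm k x) k' k' * c - c * ps (Sm k x) l l)"
    proof -
      have "smul k (ps x k' k' * c - c * ps x l l) = smul k (ps x k' k') * c - c * smul k (ps x l l)"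
        using sm_diff[of k "ps x k' k' * c" "c * ps x l l"] sm_mult_l[of k "ps x k' k'" c] sm_mult_r[of k c "ps x l l"]
        by (simp only:)
      thus ?thesis by simp
    qed
    finally show "Br (Sm k x) (Gen k' l c) \<approx> Gen k' l (ps (Sm k x) k' k' * c - c * ps (Sm k x) l l)" .
  qed
  moreover have "Rgt (Sm k x)" unfolding Rgt_def
  proof (intro allI impI)
    fix k' l c assume kl: "k' < NN" "l < NN" "k' \<noteq> l"
    have "Br (Gen k' l c) (Sm k x) \<approx> Sm k (Br (Gen k' l c) x)" by (rule stl_eq.br_sm_right)
    also have "\<dots> \<approx> Sm k (Gen k' l (c * ps x l l - ps x k' k' * c))"
      using hsm.IH kl unfolding Rgt_def by (intro sm_cong) auto
    also have "\<dots> \<approx> Gen k' l (smul k (c * ps x l l - ps x k' k' * c))"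
      using kl by (intro gensm)
    also have "\<dots> = Gen k' l (c * ps (Sm k x) l l - ps (Sm k x) k' k' * c)"
    proof -
      have "smul k (c * ps x l l - ps x k' k' * c) = c * smul k (ps x l l) - smul k (ps x k' k') * c"
        using sm_diff[of k "c * ps x l l" "ps x k' k' * c"] sm_mult_l[of k "ps x k' k'" c] sm_mult_r[of k c "ps x l l"]
        by (simp only:)
      thus ?thesis by simp
    qed
    finally show "Br (Gen k' l c) (Sm k x) \<approx> Gen k' l (c * ps (Sm k x) l l - ps (Sm k x) k' k' * c)" .
  qed
  ultimately show ?case using hsm.IH by (simp add: hdeg.intros(4) sm_zero_r)
qed

lemma Vs_diag: "Vs g \<Longrightarrow> ps g r r = 0"
  by (induction g rule: Vs.induct) (auto simp: E_def sm_zero_r)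


fun lsum :: "('b \<Rightarrow> ('k, 'a) tm) \<Rightarrow> 'b list \<Rightarrow> ('k, 'a) tm" where
  "lsum f [] = Zr"
| "lsum f (x # xs) = Ad (f x) (lsum f xs)"

lemma lsum_cong: "(\<And>x. x \<in> set xs \<Longrightarrow> f x \<approx> g x) \<Longrightarrow> lsum f xs \<approx> lsum g xs"
  by (induction xs) (auto intro: eq_refl ad_cong)

lemma lsum_add: "lsum (\<lambda>x. Ad (f x) (g x)) xs \<approx> Ad (lsum f xs) (lsum g xs)"
proof (induction xs)
  case Nil show ?case by (simp add: eq_sym[OF stl_eq.add_zero])
next
  case (Cons x xs)
  have "lsum (\<lambda>x. Ad (f x) (g x)) (x # xs) \<approx> Ad (Ad (f x) (g x)) (Ad (lsum f xs) (lsum g xs))"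
    using Cons.IH by (simp add: ad_cong eq_refl)
  also have "\<dots> \<approx> Ad (Ad (f x) (lsum f xs)) (Ad (g x) (lsum g xs))" by (rule swap4)
  finally show ?case by simp
qed

lemma lsum_sm: "lsum (\<lambda>x. Sm k (f x)) xs \<approx> Sm k (lsum f xs)"
proof (induction xs)
  case Nil show ?case by (simp add: eq_sym[OF smZr])
next
  case (Cons x xs)
  have "lsum (\<lambda>x. Sm k (f x)) (x # xs) \<approx> Ad (Sm k (f x)) (Sm k (lsum f xs))"
    using Cons.IH by (simp add: ad_cong eq_refl)
  also have "\<dots> \<approx> Sm k (Ad (f x) (lsum f xs))" by (rule eq_sym[OF sm_ad])
  finally show ?case by simp
qed

lemma lsum_zero: "(\<And>x. x \<in> set xs \<Longrightarrow> f x \<approx> Zr) \<Longrightarrow> lsum f xs \<approx> Zr"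
proof (induction xs)
  case Nil show ?case by (simp add: eq_refl)
next
  case (Cons x xs) thus ?case by (simp add: zad)
qed

lemma lsum_single:
  "distinct xs \<Longrightarrow> x0 \<in> set xs \<Longrightarrow> (\<And>x. x \<in> set xs \<Longrightarrow> x \<noteq> x0 \<Longrightarrow> f x \<approx> Zr) \<Longrightarrow> lsum f xs \<approx> f x0"
proof (induction xs)
  case Nil thus ?case by simp
next
  case (Cons x xs)
  show ?case
  proof (cases "x = x0")
    case True
    have "lsum f xs \<approx> Zr" using Cons.prems True by (intro lsum_zero) auto
    thus ?thesis using True by (simp add: adz eq_refl)
  next
    case False
    have "lsum f xs \<approx> f x0" using Cons False by auto
    moreover have "f x \<approx> Zr" using Cons.prems False by auto
    ultimately show ?thesis by (simp add: zad)
  qed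
qed

definition Lv :: "'a mat \<Rightarrow> ('k, 'a) tm" where
  "Lv M = lsum (\<lambda>p. lsum (\<lambda>q. if p = q then Zr else Gen p q (M p q)) [0..<NN]) [0..<NN]"

lemma Lv_E:
  assumes "p < NN" "q < NN" "p \<noteq> q"
  shows "Lv (E p q c) \<approx> Gen p q c"
proof -
  let ?F = "\<lambda>p'. lsum (\<lambda>q'. if p' = q' then Zr else Gen p' q' (E p q c p' q')) [0..<NN]"
  have "Lv (E p q c) \<approx> ?F p"
    unfolding Lv_def
  proof (rule lsum_single)
    show "distinct [0..<NN]" "p \<in> set [0..<NN]" using assms by auto
    show "?F p' \<approx> Zr" if "p' \<in> set [0..<NN]" "p' \<noteq> p" for p'
      using that by (intro lsum_zero) (auto simp: E_def eq_refl gen0)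
  qed
  also have "?F p \<approx> (\<lambda>q'. if p = q' then Zr else Gen p q' (E p q c p q')) q"
    using assms by (intro lsum_single) (auto simp: E_def eq_refl gen0)
  also have "\<dots> = Gen p q c" using assms by (simp add: E_def)
  finally show ?thesis .
qed

lemma Lv_zero: "Lv 0 \<approx> Zr"
  unfolding Lv_def by (intro lsum_zero) (auto simp: eq_refl gen0)

lemma Lv_add: "Lv (M + M') \<approx> Ad (Lv M) (Lv M')"
proof -
  have "Lv (M + M') \<approx> lsum (\<lambda>p. Ad (lsum (\<lambda>q. if p = q then Zr else Gen p q (M p q)) [0..<NN])
        (lsum (\<lambda>q. if p = q then Zr else Gen p q (M' p q)) [0..<NN])) [0..<NN]"
    unfolding Lv_def
  proof (intro lsum_cong)
    fix p assume p: "p \<in> set [0..<NN]"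
    have "lsum (\<lambda>q. if p = q then Zr else Gen p q ((M + M') p q)) [0..<NN] \<approx>
      lsum (\<lambda>q. Ad (if p = q then Zr else Gen p q (M p q)) (if p = q then Zr else Gen p q (M' p q))) [0..<NN]"
      using p by (intro lsum_cong) (auto simp: eq_sym[OF stl_eq.add_zero] eq_sym[OF genadd])
    also have "\<dots> \<approx> Ad (lsum (\<lambda>q. if p = q then Zr else Gen p q (M p q)) [0..<NN])
        (lsum (\<lambda>q. if p = q then Zr else Gen p q (M' p q)) [0..<NN])" by (rule lsum_add)
    finally show "lsum (\<lambda>q. if p = q then Zr else Gen p q ((M + M') p q)) [0..<NN] \<approx> \<dots>" .
  qed
  also have "\<dots> \<approx> Ad (Lv M) (Lv M')" unfolding Lv_def by (rule lsum_add)
  finally show ?thesis .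
qed

lemma Lv_sm: "Lv (msm k M) \<approx> Sm k (Lv M)"
proof -
  have "Lv (msm k M) \<approx> lsum (\<lambda>p. Sm k (lsum (\<lambda>q. if p = q then Zr else Gen p q (M p q)) [0..<NN])) [0..<NN]"
    unfolding Lv_def
  proof (intro lsum_cong)
    fix p assume p: "p \<in> set [0..<NN]"
    have "lsum (\<lambda>q. if p = q then Zr else Gen p q (msm k M p q)) [0..<NN] \<approx>
      lsum (\<lambda>q. Sm k (if p = q then Zr else Gen p q (M p q))) [0..<NN]"
      using p by (intro lsum_cong) (auto simp: eq_sym[OF smZr] eq_sym[OF gensm] msm_def)
    also have "\<dots> \<approx> Sm k (lsum (\<lambda>q. if p = q then Zr else Gen p q (M p q)) [0..<NN])" by (rule lsum_sm)
    finally show "lsum (\<lambda>q. if p = q then Zr else Gen p q (msm k M p q)) [0..<NN] \<approx> \<dots>" .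
  qed
  also have "\<dots> \<approx> Sm k (Lv M)" unfolding Lv_def by (rule lsum_sm)
  finally show ?thesis .
qed

lemma Vs_Lv: "Vs g \<Longrightarrow> g \<approx> Lv (ps g)"
proof (induction g rule: Vs.induct)
  case (vgen i j a) thus ?case by (simp add: eq_sym[OF Lv_E])
next
  case vzr thus ?case by (simp only: psi_Zr eq_sym[OF Lv_zero])
next
  case (vad x y)
  have "Ad x y \<approx> Ad (Lv (ps x)) (Lv (ps y))" using vad.IH by (rule ad_cong)
  also have "\<dots> \<approx> Lv (ps (Ad x y))" unfolding psi_Ad by (rule eq_sym[OF Lv_add])
  finally show ?case .
next
  case (vsm x k)
  have "Sm k x \<approx> Sm k (Lv (ps x))" using vsm.IH by (rule sm_cong)
  also have "\<dots> \<approx> Lv (ps (Sm k x))" unfolding psi_Sm by (rule eq_sym[OF Lv_sm])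
  finally show ?case .
qed


definition Dc where "Dc x \<longleftrightarrow> (\<exists>g th. Vs g \<and> Hs th \<and> x \<approx> Ad g th)"

lemma Dc_cong: "x \<approx> y \<Longrightarrow> Dc y \<Longrightarrow> Dc x"
  unfolding Dc_def by (meson eq_trans)

lemma Dc_Zr: "Dc Zr"
  unfolding Dc_def using vzr hzr eq_sym[OF stl_eq.add_zero] by blast

lemma Dc_Ad: "Dc x \<Longrightarrow> Dc y \<Longrightarrow> Dc (Ad x y)"
proof -
  assume "Dc x" "Dc y"
  then obtain g th g' th' where h: "Vs g" "Hs th" "x \<approx> Ad g th" "Vs g'" "Hs th'" "y \<approx> Ad g' th'"
    unfolding Dc_def by blast
  have "Ad x y \<approx> Ad (Ad g th) (Ad g' th')" using h by (intro ad_cong)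
  also have "\<dots> \<approx> Ad (Ad g g') (Ad th th')" by (rule swap4)
  finally show ?thesis unfolding Dc_def using h vad had by blast
qed

lemma Dc_Sm: "Dc x \<Longrightarrow> Dc (Sm k x)"
proof -
  assume "Dc x"
  then obtain g th where h: "Vs g" "Hs th" "x \<approx> Ad g th" unfolding Dc_def by blast
  have "Sm k x \<approx> Sm k (Ad g th)" using h by (intro sm_cong)
  also have "\<dots> \<approx> Ad (Sm k g) (Sm k th)" by (rule sm_ad)
  finally show ?thesis unfolding Dc_def using h vsm hsm by blast
qed

lemma Vs_Dc: "Vs g \<Longrightarrow> Dc g"
  unfolding Dc_def using hzr eq_sym[OF stl_eq.add_zero] by blast

lemma Hs_Dc: "Hs th \<Longrightarrow> Dc th"
  unfolding Dc_def using vzr eq_sym[OF addZl] by blast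

lemma Dc_br_left:
  assumes "\<And>y. P y \<Longrightarrow> Dc (Br x y)" "\<And>y. P y \<Longrightarrow> Dc (Br x' y)" "P y"
  shows "Dc (Br (Ad x x') y)"
  using assms by (meson Dc_Ad Dc_cong stl_eq.br_add_left)

lemma brGG:
  assumes "i < NN" "j < NN" "i \<noteq> j" "k < NN" "l < NN" "k \<noteq> l"
  shows "Dc (Br (Gen i j a) (Gen k l b))"
proof -
  consider "j = k" "i \<noteq> l" | "j = k" "i = l" | "j \<noteq> k" "i = l" | "j \<noteq> k" "i \<noteq> l" by blast
  thus ?thesis
  proof cases
    case 1
    have e: "Br (Gen i j a) (Gen k l b) \<approx> Gen i l (a * b)" using 1 assms stl_eq.rel3[where i=i and j=j and l=l and a=a and b=b] by auto
    show ?thesis using 1 assms by (intro Dc_cong[OF e] Vs_Dc vgen) auto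
  next
    case 2 thus ?thesis using assms by (intro Hs_Dc) (auto intro: hh)
  next
    case 3
    have e: "Br (Gen i j a) (Gen k l b) \<approx> Sm (- sgn (tau m i j \<and> tau m k l)) (Gen k j (b * a))"
      using 3 assms stl_eq.rel4[where i=i and j=j and k=k and a=a and b=b] by auto
    show ?thesis using 3 assms by (intro Dc_cong[OF e] Dc_Sm Vs_Dc vgen) auto
  next
    case 4
    have e: "Br (Gen i j a) (Gen k l b) \<approx> Zr" using 4 assms by (intro stl_eq.rel2) auto
    show ?thesis by (intro Dc_cong[OF e] Dc_Zr)
  qed
qed

lemma Dc_right_lin:
  assumes "Vs y" "\<And>k l c. k < NN \<Longrightarrow> l < NN \<Longrightarrow> k \<noteq> l \<Longrightarrow> Dc (Br x (Gen k l c))"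
  shows "Dc (Br x y)"
  using assms(1)
proof (induction y rule: Vs.induct)
  case (vgen i j a) thus ?case using assms(2) by blast
next
  case vzr thus ?case by (rule Dc_cong[OF brZr Dc_Zr])
next
  case (vad y1 y2) thus ?case by (intro Dc_cong[OF stl_eq.br_add_right] Dc_Ad)
next
  case (vsm y k) thus ?case by (intro Dc_cong[OF stl_eq.br_sm_right] Dc_Sm)
qed

lemma Dc_left_lin_V:
  assumes "Vs x" "\<And>i j a. i < NN \<Longrightarrow> j < NN \<Longrightarrow> i \<noteq> j \<Longrightarrow> Dc (Br (Gen i j a) y)"
  shows "Dc (Br x y)"
  using assms(1)
proof (induction x rule: Vs.induct)
  case (vgen i j a) thus ?case using assms(2) by blast
next
  case vzr thus ?case by (rule Dc_cong[OF brZl Dc_Zr])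
next
  case (vad y1 y2) thus ?case by (intro Dc_cong[OF stl_eq.br_add_left] Dc_Ad)
next
  case (vsm y k) thus ?case by (intro Dc_cong[OF stl_eq.br_sm_left] Dc_Sm)
qed

context
  assumes N3: "3 \<le> NN"
begin

lemma brVV: assumes "Vs g" "Vs g'" shows "Dc (Br g g')"
proof (rule Dc_left_lin_V[OF assms(1)])
  fix i j a assume ij: "i < NN" "j < NN" "i \<noteq> j"
  show "Dc (Br (Gen i j a) g')"
  proof (rule Dc_right_lin[OF assms(2)])
    fix k l c assume "k < NN" "l < NN" "k \<noteq> l"
    thus "Dc (Br (Gen i j a) (Gen k l c))" using ij by (intro brGG)
  qed
qed

lemma brVH: assumes "Vs g" "Hs th" shows "Dc (Br g th)"
proof (rule Dc_left_lin_V[OF assms(1)])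
  fix i j a assume "i < NN" "j < NN" "i \<noteq> j"
  note \<open>Hs th\<close>
  hence "Br (Gen i j a) th \<approx> Gen i j (a * ps th j j - ps th i i * a)"
  proof -
    have "Rgt th" using Hs_props[OF N3 \<open>Hs th\<close>] by simp
    thus ?thesis unfolding Rgt_def using \<open>i < NN\<close> \<open>j < NN\<close> \<open>i \<noteq> j\<close> by simp
  qed
  moreover have "Dc (Gen i j (a * ps th j j - ps th i i * a))"
    using \<open>i < NN\<close> \<open>j < NN\<close> \<open>i \<noteq> j\<close> by (intro Vs_Dc vgen)
  ultimately show "Dc (Br (Gen i j a) th)" by (rule Dc_cong)
qed

lemma brHV: assumes "Hs th" "Vs g" shows "Dc (Br th g)"
proof (rule Dc_right_lin[OF assms(2)])
  fix i j a assume "i < NN" "j < NN" "i \<noteq> j"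
  note \<open>Hs th\<close>
  hence "Br th (Gen i j a) \<approx> Gen i j (ps th i i * a - a * ps th j j)"
  proof -
    have "Lft th" using Hs_props[OF N3 \<open>Hs th\<close>] by simp
    thus ?thesis unfolding Lft_def using \<open>i < NN\<close> \<open>j < NN\<close> \<open>i \<noteq> j\<close> by simp
  qed
  moreover have "Dc (Gen i j (ps th i i * a - a * ps th j j))"
    using \<open>i < NN\<close> \<open>j < NN\<close> \<open>i \<noteq> j\<close> by (intro Vs_Dc vgen)
  ultimately show "Dc (Br th (Gen i j a))" by (rule Dc_cong)
qed

lemma brHH: assumes hth: "Hs th" shows "Hs th' \<Longrightarrow> Dc (Br th th')"
proof (induction th' rule: Hs.induct)
  case (hh i j a b)
  have P: "hdeg m th False" "Lft th" using Hs_props[OF N3 hth] by auto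
  have "Br th (Br (Gen i j a) (Gen j i b)) \<approx> Ad (Br (Br th (Gen i j a)) (Gen j i b)) (Br (Gen i j a) (Br th (Gen j i b)))"
    by (rule leib_left[OF P(1) hgen hgen])
  also have "\<dots> \<approx> Ad (Br (Gen i j (ps th i i * a - a * ps th j j)) (Gen j i b)) (Br (Gen i j a) (Gen j i (ps th j j * b - b * ps th i i)))"
    using P(2) hh.hyps unfolding Lft_def by (intro ad_cong br_cong eq_refl) auto
  finally have e: "Br th (Br (Gen i j a) (Gen j i b)) \<approx> Ad (Br (Gen i j (ps th i i * a - a * ps th j j)) (Gen j i b)) (Br (Gen i j a) (Gen j i (ps th j j * b - b * ps th i i)))" .
  have h1: "Hs (Br (Gen i j (ps th i i * a - a * ps th j j)) (Gen j i b))" using hh.hyps by (rule Hs.hh)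
  have h2: "Hs (Br (Gen i j a) (Gen j i (ps th j j * b - b * ps th i i)))" using hh.hyps by (rule Hs.hh)
  show ?case by (rule Dc_cong[OF e Dc_Ad[OF Hs_Dc[OF h1] Hs_Dc[OF h2]]])
next
  case hzr thus ?case by (rule Dc_cong[OF brZr Dc_Zr])
next
  case (had y1 y2) thus ?case by (intro Dc_cong[OF stl_eq.br_add_right] Dc_Ad)
next
  case (hsm y k) thus ?case by (intro Dc_cong[OF stl_eq.br_sm_right] Dc_Sm)
qed

lemma decomp: "wf_tm m n x \<Longrightarrow> Dc x"
proof (induction x)
  case (Gen i j a) thus ?case by (intro Vs_Dc vgen) auto
next
  case Zr show ?case by (rule Dc_Zr)
next
  case (Ad x y) thus ?case by (auto intro: Dc_Ad)
next
  case (Sm k x) thus ?case by (auto intro: Dc_Sm)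
next
  case (Br x y)
  then obtain g th g' th' where h: "Vs g" "Hs th" "x \<approx> Ad g th" "Vs g'" "Hs th'" "y \<approx> Ad g' th'"
    unfolding Dc_def by auto
  have "Br x y \<approx> Br (Ad g th) (Ad g' th')" using h by (intro br_cong)
  also have "\<dots> \<approx> Ad (Br g (Ad g' th')) (Br th (Ad g' th'))" by (rule stl_eq.br_add_left)
  also have "\<dots> \<approx> Ad (Ad (Br g g') (Br g th')) (Ad (Br th g') (Br th th'))"
    by (intro ad_cong stl_eq.br_add_right)
  finally have e: "Br x y \<approx> Ad (Ad (Br g g') (Br g th')) (Ad (Br th g') (Br th th'))" .
  show ?case by (rule Dc_cong[OF e Dc_Ad[OF Dc_Ad[OF brVV[OF h(1,4)] brVH[OF h(1,5)]] Dc_Ad[OF brHV[OF h(2,4)] brHH[OF h(2,5)]]]])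
qed


lemma cent:
  assumes hth: "Hs th" and z: "ps th = 0" and wx: "wf_tm m n x"
  shows "Br th x \<approx> Zr \<and> Br x th \<approx> Zr"
proof -
  have P: "hdeg m th False" "Lft th" "Rgt th" using Hs_props[OF N3 hth] by auto
  have zz: "ps th r s = 0" for r s using z by simp
  have GL: "Br th (Gen k l c) \<approx> Zr" if "k < NN" "l < NN" "k \<noteq> l" for k l c
  proof -
    have "Br th (Gen k l c) \<approx> Gen k l (ps th k k * c - c * ps th l l)" using P(2) that unfolding Lft_def by simp
    also have "\<dots> = Gen k l 0" by (simp add: zz)
    also have "\<dots> \<approx> Zr" using that by (rule gen0)
    finally show ?thesis .
  qed
  have GR: "Br (Gen k l c) th \<approx> Zr" if "k < NN" "l < NN" "k \<noteq> l" for k l c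
  proof -
    have "Br (Gen k l c) th \<approx> Gen k l (c * ps th l l - ps th k k * c)" using P(3) that unfolding Rgt_def by simp
    also have "\<dots> = Gen k l 0" by (simp add: zz)
    also have "\<dots> \<approx> Zr" using that by (rule gen0)
    finally show ?thesis .
  qed
  have VL: "Br th g \<approx> Zr" if "Vs g" for g
    using that
  proof (induction g rule: Vs.induct)
    case (vgen i j a) thus ?case by (rule GL)
  next
    case vzr show ?case by (rule brZr)
  next
    case (vad x y) thus ?case by (meson eq_trans stl_eq.br_add_right adz)
  next
    case (vsm x k) thus ?case by (meson eq_trans stl_eq.br_sm_right sm_cong smZr)
  qed
  have VR: "Br g th \<approx> Zr" if "Vs g" for g
    using that
  proof (induction g rule: Vs.induct)
    case (vgen i j a) thus ?case by (rule GR)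
  next
    case vzr show ?case by (rule brZl)
  next
    case (vad x y) thus ?case by (meson eq_trans stl_eq.br_add_left adz)
  next
    case (vsm x k) thus ?case by (meson eq_trans stl_eq.br_sm_left sm_cong smZr)
  qed
  have HL: "Br th h \<approx> Zr" if "Hs h" for h
    using that
  proof (induction h rule: Hs.induct)
    case (hh i j a b)
    have "Br th (Br (Gen i j a) (Gen j i b)) \<approx> Ad (Br (Br th (Gen i j a)) (Gen j i b)) (Br (Gen i j a) (Br th (Gen j i b)))"
      by (rule leib_left[OF P(1) hgen hgen])
    also have "\<dots> \<approx> Ad (Br Zr (Gen j i b)) (Br (Gen i j a) Zr)" using hh by (intro ad_cong br_cong eq_refl GL) auto
    also have "\<dots> \<approx> Zr" by (intro zad brZl brZr)
    finally show ?case .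
  next
    case hzr show ?case by (rule brZr)
  next
    case (had x y) thus ?case by (meson eq_trans stl_eq.br_add_right adz)
  next
    case (hsm x k) thus ?case by (meson eq_trans stl_eq.br_sm_right sm_cong smZr)
  qed
  have HR: "Br h th \<approx> Zr" if "Hs h" for h
    using that
  proof (induction h rule: Hs.induct)
    case (hh i j a b)
    have "Br (Br (Gen i j a) (Gen j i b)) th \<approx> Ad (Br (Gen i j a) (Br (Gen j i b) th)) (Sm (- sgn (tau m i j \<and> tau m j i)) (Br (Gen j i b) (Br (Gen i j a) th)))"
      by (rule stl_eq.leibniz[OF hgen hgen P(1)])
    also have "\<dots> \<approx> Ad (Br (Gen i j a) Zr) (Sm (- sgn (tau m i j \<and> tau m j i)) (Br (Gen j i b) Zr))"
      using hh by (intro ad_cong sm_cong br_cong eq_refl GR) auto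
    also have "\<dots> \<approx> Zr" by (intro zad brZr z1)
    finally show ?case .
  next
    case hzr show ?case by (rule brZl)
  next
    case (had x y) thus ?case by (meson eq_trans stl_eq.br_add_left adz)
  next
    case (hsm x k) thus ?case by (meson eq_trans stl_eq.br_sm_left sm_cong smZr)
  qed
  obtain g h where gh: "Vs g" "Hs h" "x \<approx> Ad g h" using decomp[OF wx] unfolding Dc_def by blast
  have "Br th x \<approx> Br th (Ad g h)" using gh by (intro br_cong eq_refl)
  also have "\<dots> \<approx> Ad (Br th g) (Br th h)" by (rule stl_eq.br_add_right)
  also have "\<dots> \<approx> Zr" using gh by (intro adz VL HL)
  finally have L: "Br th x \<approx> Zr" .
  have "Br x th \<approx> Br (Ad g h) th" using gh by (intro br_cong eq_refl)
  also have "\<dots> \<approx> Ad (Br g th) (Br h th)" by (rule stl_eq.br_add_left)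
  also have "\<dots> \<approx> Zr" using gh by (intro adz VR HR)
  finally have R: "Br x th \<approx> Zr" .
  show ?thesis using L R by blast
qed

lemma main:
  assumes wt: "wf_tm m n t" and wx: "wf_tm m n x" and z: "ps t = (\<lambda>r s. 0)"
  shows "Br t x \<approx> Zr \<and> Br x t \<approx> Zr"
proof -
  obtain g th where gh: "Vs g" "Hs th" "t \<approx> Ad g th" using decomp[OF wt] unfolding Dc_def by blast
  have e: "ps t = ps g + ps th" using psi_sound[OF gh(3)] by (simp only: psi_Ad)
  have pt: "ps t r s = 0" for r s using z by simp
  have pth: "ps th = 0"
  proof (rule fun2_eq)
    fix r s
    show "ps th r s = 0 r s"
    proof (cases "r = s")
      case True
      have "ps t r r = ps g r r + ps th r r" using e by simp
      thus ?thesis using True pt[of r r] Vs_diag[OF gh(1), of r] by simp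
    next
      case False thus ?thesis using Hs_props[OF N3 gh(2)] by simp
    qed
  qed
  have pg: "ps g = 0"
  proof (rule fun2_eq)
    fix r s
    have "ps t r s = ps g r s + ps th r s" using e by simp
    thus "ps g r s = 0 r s" using pt[of r s] pth by simp
  qed
  have "g \<approx> Lv (ps g)" by (rule Vs_Lv[OF gh(1)])
  also have "\<dots> \<approx> Zr" unfolding pg by (rule Lv_zero)
  finally have g0: "g \<approx> Zr" .
  have "t \<approx> th" using gh(3) g0 by (meson eq_trans zad eq_refl)
  thus ?thesis using cent[OF gh(2) pth wx] by (meson br_cong eq_refl eq_trans)
qed

end

end

theorem theorem3p1:
  fixes m n :: nat and smul :: "'k::field \<Rightarrow> 'a::ring_1 \<Rightarrow> 'a"
  assumes "(2::'k) \<noteq> 0" and "(3::'k) \<noteq> 0"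
    and "kalg smul"
    and "m + n \<ge> 3"
    and "wf_tm m n t" and "wf_tm m n x"
    and "psi m n smul t = (\<lambda>r s. 0)"
  shows "stl_eq m n smul (Br t x) Zr \<and> stl_eq m n smul (Br x t) Zr"
proof -
  interpret S: stl smul m n by unfold_locales (rule assms(3))
  show ?thesis using S.main[OF assms(4) assms(5) assms(6) assms(7)] .
qed

end
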